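(* Let $\Omega\subset\mathbb{R}^2$ have properties (i), $( * )$, $( ** )$. Let $t\mapsto(x,y)(t)\in\mathbb{R}_+\Omega$ be an absolutely continuous curve that never passes through the origin, and write $(x,y)(t)=R(t)(\cosh_\Omega\theta(t),\sinh_\Omega\theta(t))$ with $R(t)\ge0$. Then $R(t)$ and $\theta(t)$ are absolutely continuous. If, at the value $\theta=\theta(t)$, the functions $\cosh_\Omega,\sinh_\Omega$ are differentiable, i.e. $\theta^\diamond=\{\eta\}$ is a singleton, then $$\dot R=\dot x\cosh_{\Omega^\diamond}\eta-\dot y\sinh_{\Omega^\diamond}\eta,\qquad \dot\theta=\frac{\dot y\cosh_\Omega\theta-\dot x\sinh_\Omega\theta}{R}.$$
   Context: Points of $\mathbb{R}^2$: $(x,y)$; of $\mathbb{R}^{2*}$: $(p,q)$; $\mathbb{R}_+\Omega=\{\lambda\omega:\lambda\ge0,\omega\in\Omega\}$. Property (i): $\Omega$ nonempty, convex, closed, $0\notin\Omega$, $\lambda\Omega\subset\Omega$ for $\lambda>1$. $( * )$: $\lambda\Omega\cap\partial\Omega=\varnothing$ for all $\lambda>1$. $( ** )$: the boundary rays $l_0,l_1$ of $C=\operatorname{cl}(\mathbb{R}_+\Omega)$ satisfy $\operatorname{dist}(l_k,\Omega)=0$. Antipolar: $\Omega^\diamond=\{(p,q):px-qy\ge1\ \forall (x,y)\in\Omega\}$. Hyperbolic convex trigonometric functions: fix $\omega_0=(x_0,y_0)\in\partial\Omega$, $\omega_0^\diamond=(p_0,q_0)\in\partial\Omega^\diamond$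 with $p_0x_0-q_0y_0=1$; for $\omega=(x,y)\in\partial\Omega$, $\theta$ is twice the signed (counterclockwise positive) area of the region bounded by the segment $O\omega_0$, the arc of $\partial\Omega$ from $\omega_0$ to $\omega$ and the segment $\omega O$, and $(\cosh_\Omega\theta,\sinh_\Omega\theta)=(x,y)$; $\cosh_{\Omega^\diamond},\sinh_{\Omega^\diamond}$ are defined likewise from $\Omega^\diamond$, $\omega_0^\diamond$. $\theta^\diamond$ is the set of $\eta$ with $\cosh_\Omega\theta\cosh_{\Omega^\diamond}\eta-\sinh_\Omega\theta\sinh_{\Omega^\diamond}\eta=1$. *)

theory Defs
  imports "HOL-Analysis.Analysis"
begin

definition pos_cone :: "(real \<times> real) set \<Rightarrow> (real \<times> real) set" where
  "pos_cone \<Omega> = {c *\<^sub>R w | c w. c \<ge> 0 \<and> w \<in> \<Omega>}"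

definition prop_i :: "(real \<times> real) set \<Rightarrow> bool" where
  "prop_i \<Omega> \<longleftrightarrow> \<Omega> \<noteq> {} \<and> convex \<Omega> \<and> closed \<Omega> \<and> (0::real\<times>real) \<notin> \<Omega> \<and>
     (\<forall>c::real. c > 1 \<longrightarrow> (\<lambda>x. c *\<^sub>R x) ` \<Omega> \<subseteq> \<Omega>)"

definition prop_star :: "(real \<times> real) set \<Rightarrow> bool" where
  "prop_star \<Omega> \<longleftrightarrow> (\<forall>c::real. c > 1 \<longrightarrow> ((\<lambda>x. c *\<^sub>R x) ` \<Omega>) \<inter> frontier \<Omega> = {})"

definition ray :: "real \<times> real \<Rightarrow> (real \<times> real) set" where
  "ray v = {t *\<^sub>R v | t. t \<ge> 0}"

definition boundary_ray :: "(real \<times> real) set \<Rightarrow> (real \<times> real) set \<Rightarrow> bool" where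
  "boundary_ray C l \<longleftrightarrow> (\<exists>v. v \<noteq> 0 \<and> l = ray v \<and> l \<subseteq> frontier C)"

definition prop_starstar :: "(real \<times> real) set \<Rightarrow> bool" where
  "prop_starstar \<Omega> \<longleftrightarrow>
     (\<forall>l. boundary_ray (closure (pos_cone \<Omega>)) l \<longrightarrow> setdist l \<Omega> = 0)"

definition antipolar :: "(real \<times> real) set \<Rightarrow> (real \<times> real) set" where
  "antipolar \<Omega> = {(p, q). \<forall>(x, y) \<in> \<Omega>. p * x - q * y \<ge> 1}"

text \<open>The region bounded by the segment O w0, the arc of the boundary of Omega from w0 to w,
  and the segment w O.\<close>
definition sector :: "(real \<times> real) set \<Rightarrow> real \<times> real \<Rightarrow> real \<times> real \<Rightarrow> (real \<times> real) set" where
  "sector \<Omega> w0 w = {s *\<^sub>R u | s u. 0 \<le> s \<and> s \<le> 1 \<and> u \<in> frontier \<Omega> \<and>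
       (\<exists>\<alpha> \<beta>. \<alpha> \<ge> 0 \<and> \<beta> \<ge> 0 \<and> u = \<alpha> *\<^sub>R w0 + \<beta> *\<^sub>R w)}"

text \<open>Hyperbolic angle theta of a boundary point w: twice the signed area (counterclockwise
  positive) of the sector from w0 to w.\<close>
definition hang :: "(real \<times> real) set \<Rightarrow> real \<times> real \<Rightarrow> real \<times> real \<Rightarrow> real" where
  "hang \<Omega> w0 w = sgn (fst w0 * snd w - snd w0 * fst w) * 2 * measure lebesgue (sector \<Omega> w0 w)"

definition hpoint :: "(real \<times> real) set \<Rightarrow> real \<times> real \<Rightarrow> real \<Rightarrow> real \<times> real" where
  "hpoint \<Omega> w0 \<theta> = (THE w. w \<in> frontier \<Omega> \<and> hang \<Omega> w0 w = \<theta>)"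

definition hcosh :: "(real \<times> real) set \<Rightarrow> real \<times> real \<Rightarrow> real \<Rightarrow> real" where
  "hcosh \<Omega> w0 \<theta> = fst (hpoint \<Omega> w0 \<theta>)"

definition hsinh :: "(real \<times> real) set \<Rightarrow> real \<times> real \<Rightarrow> real \<Rightarrow> real" where
  "hsinh \<Omega> w0 \<theta> = snd (hpoint \<Omega> w0 \<theta>)"

definition hdom :: "(real \<times> real) set \<Rightarrow> real \<times> real \<Rightarrow> real set" where
  "hdom \<Omega> w0 = hang \<Omega> w0 ` frontier \<Omega>"

definition hdual :: "(real \<times> real) set \<Rightarrow> real \<times> real \<Rightarrow> real \<times> real \<Rightarrow> real \<Rightarrow> real set" where
  "hdual \<Omega> w0 w0d \<theta> = {\<eta> \<in> hdom (antipolar \<Omega>) w0d.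
      hcosh \<Omega> w0 \<theta> * hcosh (antipolar \<Omega>) w0d \<eta> - hsinh \<Omega> w0 \<theta> * hsinh (antipolar \<Omega>) w0d \<eta> = 1}"

definition abs_cont_on :: "real \<Rightarrow> real \<Rightarrow> (real \<Rightarrow> 'a::real_normed_vector) \<Rightarrow> bool" where
  "abs_cont_on a b f \<longleftrightarrow> (\<forall>\<epsilon>>0. \<exists>\<delta>>0. \<forall>(n::nat) (u::nat \<Rightarrow> real) v.
      (\<forall>i<n. a \<le> u i \<and> u i \<le> v i \<and> v i \<le> b) \<and>
      (\<forall>i<n. \<forall>j<n. i \<noteq> j \<longrightarrow> v i \<le> u j \<or> v j \<le> u i) \<and>
      (\<Sum>i<n. v i - u i) < \<delta> \<longrightarrow> (\<Sum>i<n. norm (f (v i) - f (u i))) < \<epsilon>)"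

end

theory Submission
  imports Defs
begin

definition P2 :: "real^2 \<Rightarrow> real \<times> real" where "P2 v = (v$1, v$2)"
definition Q2 :: "real \<times> real \<Rightarrow> real^2" where "Q2 p = vector [fst p, snd p]"

lemma UNIV_2: "(UNIV :: 2 set) = {1, 2}" using exhaust_2 by auto

lemma P2Q2[simp]: "P2 (Q2 p) = p" by (simp add: P2_def Q2_def)
lemma Q2P2[simp]: "Q2 (P2 v) = v"
  unfolding vec_eq_iff
proof
  fix i :: 2
  have "i = 1 \<or> i = 2" using exhaust_2 by blast
  then show "Q2 (P2 v) $ i = v $ i" by (auto simp: P2_def Q2_def)
qed

lemma linear_P2: "linear P2"
  by (rule linearI) (auto simp: P2_def)
lemma Q2_comp: "Q2 p $ i = (if i = 1 then fst p else snd p)"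
proof -
  have "i = 1 \<or> i = 2" using exhaust_2 by blast
  then show ?thesis by (auto simp: Q2_def)
qed

lemma linear_Q2: "linear Q2"
  by (rule linearI) (auto simp: vec_eq_iff Q2_comp)

lemma Basis_vec2: "(Basis :: (real^2) set) = {axis 1 1, axis 2 1}"
  by (auto simp: Basis_vec_def UNIV_2)

lemma distr_P2: "distr lborel borel P2 = lborel"
proof (rule lborel_eqI[symmetric])
  fix l u :: "real \<times> real"
  assume le: "\<And>b. b \<in> Basis \<Longrightarrow> l \<bullet> b \<le> u \<bullet> b"
  have meas: "P2 \<in> borel_measurable lborel"
    using linear_P2 by (simp add: linear_continuous_on borel_measurable_continuous_onI linear_linear)
  obtain l1 l2 u1 u2 where lu: "l = (l1, l2)" "u = (u1, u2)" by (cases l, cases u) auto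
  have "P2 -` box l u = box (Q2 l) (Q2 u)"
    by (auto simp: lu box_def Basis_vec2 Basis_prod_def P2_def Q2_def inner_axis cart_eq_inner_axis[symmetric] UNIV_2)
  moreover have "(\<Prod>b\<in>(Basis::(real^2) set). (Q2 u - Q2 l) \<bullet> b) = (u1 - l1) * (u2 - l2)"
    by (simp add: Basis_vec2 axis_eq_axis inner_axis Q2_def lu)
  moreover have "l1 \<le> u1" "l2 \<le> u2" using le[of "(1,0)"] le[of "(0,1)"] by (auto simp: lu Basis_prod_def)
  ultimately have "emeasure lborel (P2 -` box l u) = ennreal ((u1 - l1) * (u2 - l2))"
    by (simp add: emeasure_lborel_box_eq Basis_vec2 Q2_def inner_axis lu)
  moreover have "(\<Prod>b\<in>(Basis::(real\<times>real) set). (u - l) \<bullet> b) = (u1 - l1) * (u2 - l2)"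
    by (simp add: Basis_prod_def lu)
  ultimately show "emeasure (distr lborel borel P2) (box l u) = (\<Prod>b\<in>Basis. (u - l) \<bullet> b)"
    using meas by (simp add: emeasure_distr)
qed simp

definition tri :: "real \<times> real \<Rightarrow> real \<times> real \<Rightarrow> (real \<times> real) set" where
  "tri a b = {\<alpha> *\<^sub>R a + \<beta> *\<^sub>R b | \<alpha> \<beta>. \<alpha> \<ge> 0 \<and> \<beta> \<ge> 0 \<and> \<alpha> + \<beta> \<le> 1}"

lemma tri_hull: "tri a b = convex hull {0, a, b}"
proof -
  have "convex hull {0, a, b} = {u *\<^sub>R 0 + v *\<^sub>R a + w *\<^sub>R b | u v w. 0 \<le> u \<and> 0 \<le> v \<and> 0 \<le> w \<and> u + v + w = 1}"
    by (rule convex_hull_3)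
  also have "\<dots> = tri a b"
  proof (rule set_eqI, rule iffI)
    fix x assume "x \<in> {u *\<^sub>R 0 + v *\<^sub>R a + w *\<^sub>R b | u v w. 0 \<le> u \<and> 0 \<le> v \<and> 0 \<le> w \<and> u + v + w = 1}"
    then obtain u v w where "x = u *\<^sub>R 0 + v *\<^sub>R a + w *\<^sub>R b" "0 \<le> u" "0 \<le> v" "0 \<le> w" "u + v + w = 1"
      by blast
    then show "x \<in> tri a b" unfolding tri_def
      by (intro CollectI exI[of _ v] exI[of _ w]) simp
  next
    fix x assume "x \<in> tri a b"
    then obtain \<alpha> \<beta> where "x = \<alpha> *\<^sub>R a + \<beta> *\<^sub>R b" "\<alpha> \<ge> 0" "\<beta> \<ge> 0" "\<alpha> + \<beta> \<le> 1"
      unfolding tri_def by blast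
    then show "x \<in> {u *\<^sub>R 0 + v *\<^sub>R a + w *\<^sub>R b | u v w. 0 \<le> u \<and> 0 \<le> v \<and> 0 \<le> w \<and> u + v + w = 1}"
      by (intro CollectI exI[of _ "1 - \<alpha> - \<beta>"] exI[of _ \<alpha>] exI[of _ \<beta>]) simp
  qed
  finally show ?thesis by (rule sym)
qed

lemma compact_tri: "compact (tri a b)"
  unfolding tri_hull by (rule finite_imp_compact_convex_hull) simp

lemma measure_tri: "measure lebesgue (tri a b) = \<bar>fst a * snd b - snd a * fst b\<bar> / 2"
proof -
  have cb: "tri a b \<in> sets lborel"
    using compact_tri[of a b] by (simp add: borel_compact)
  have meas: "P2 \<in> borel_measurable lborel"
    using linear_P2 by (simp add: linear_continuous_on borel_measurable_continuous_onI linear_linear)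
  have pre: "P2 -` tri a b = convex hull {0, Q2 a, Q2 b}"
  proof -
    have "P2 -` tri a b = Q2 ` tri a b"
    proof
      show "P2 -` tri a b \<subseteq> Q2 ` tri a b"
      proof
        fix x assume "x \<in> P2 -` tri a b"
        then have "P2 x \<in> tri a b" by simp
        then show "x \<in> Q2 ` tri a b" by (metis Q2P2 imageI)
      qed
      show "Q2 ` tri a b \<subseteq> P2 -` tri a b" by auto
    qed
    also have "\<dots> = convex hull (Q2 ` {0, a, b})"
      unfolding tri_hull by (rule convex_hull_linear_image[OF linear_Q2])
    also have "Q2 ` {0, a, b} = {0, Q2 a, Q2 b}"
      using linear_0[OF linear_Q2] by simp
    finally show ?thesis .
  qed
  have "measure lebesgue (tri a b) = measure lborel (tri a b)"
    using cb by simp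
  also have "\<dots> = measure (distr lborel borel P2) (tri a b)"
    by (simp add: distr_P2)
  also have "\<dots> = measure lborel (P2 -` tri a b)"
    using cb meas by (simp add: measure_distr)
  also have "\<dots> = measure lborel (convex hull {0, Q2 a, Q2 b})"
    using pre by simp
  also have "\<dots> = \<bar>fst b * snd a - fst a * snd b\<bar> / 2"
    by (subst content_triangle) (simp add: Q2_def)
  also have "\<dots> = \<bar>fst a * snd b - snd a * fst b\<bar> / 2"
    by (simp add: abs_minus_commute mult.commute)
  finally show ?thesis .
qed

definition cr :: "real \<times> real \<Rightarrow> real \<times> real \<Rightarrow> real" where
  "cr u v = fst u * snd v - snd u * fst v"
definition rot :: "real \<times> real \<Rightarrow> real \<times> real" where
  "rot h = (- snd h, fst h)"

lemma inner_pair_expand: "(a::real\<times>real) \<bullet> b = fst a * fst b + snd a * snd b"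
  by (cases a, cases b) (simp add: inner_prod_def)

lemma cr_identity: "(h \<bullet> h) * cr p q = (h \<bullet> p) * (rot h \<bullet> q) - (rot h \<bullet> p) * (h \<bullet> q)"
  by (simp add: cr_def rot_def inner_pair_expand algebra_simps)

lemma cr_self[simp]: "cr u u = 0" by (simp add: cr_def)
lemma cr_swap: "cr v u = - cr u v" by (simp add: cr_def)
lemma cr_scale_left[simp]: "cr (c *\<^sub>R u) v = c * cr u v" by (simp add: cr_def algebra_simps)
lemma cr_scale_right[simp]: "cr u (c *\<^sub>R v) = c * cr u v" by (simp add: cr_def algebra_simps)
lemma cr_add_right: "cr u (v + w) = cr u v + cr u w" by (simp add: cr_def algebra_simps)
lemma cr_diff_right: "cr u (v - w) = cr u v - cr u w" by (simp add: cr_def algebra_simps)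
lemma cr_bound: "\<bar>cr u v\<bar> \<le> norm u * norm v"
proof -
  have "\<bar>cr u v\<bar> = \<bar>rot u \<bullet> v\<bar>" by (simp add: cr_def rot_def inner_pair_expand)
  also have "\<dots> \<le> norm (rot u) * norm v" by (rule Cauchy_Schwarz_ineq2)
  also have "norm (rot u) = norm u"
    by (simp add: rot_def norm_prod_def add.commute)
  finally show ?thesis .
qed

lemma cramer: "cr u v *\<^sub>R f = cr f v *\<^sub>R u + cr u f *\<^sub>R v"
  by (simp add: cr_def prod_eq_iff algebra_simps)

lemma zero_2d:
  assumes "h \<bullet> w = 0" "cr p w = 0" "h \<bullet> p \<noteq> 0"
  shows "w = 0"
proof -
  have e1: "fst w * (h \<bullet> p) = fst p * (h \<bullet> w) - snd h * cr p w"
    by (simp add: cr_def inner_pair_expand algebra_simps)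
  have e2: "snd w * (h \<bullet> p) = snd p * (h \<bullet> w) + fst h * cr p w"
    by (simp add: cr_def inner_pair_expand algebra_simps)
  from e1 e2 assms show ?thesis by (simp add: prod_eq_iff)
qed

locale good =
  fixes S :: "(real \<times> real) set" and h :: "real \<times> real" and w0 :: "real \<times> real"
  assumes pi: "prop_i S" and ps: "prop_star S" and hS: "\<And>x. x \<in> S \<Longrightarrow> h \<bullet> x \<ge> 1"
    and w0F: "w0 \<in> frontier S"
begin

lemma closedS: "closed S" and convexS: "convex S" and nonemptyS: "S \<noteq> {}" and zeroS: "(0::real\<times>real) \<notin> S"
  using pi by (auto simp: prop_i_def)

lemma scaleS: assumes "x \<in> S" "c \<ge> 1" shows "c *\<^sub>R x \<in> S"
proof (cases "c = 1")
  case False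
  then have "c > 1" using assms by simp
  then show ?thesis using pi assms by (auto simp: prop_i_def)
qed (use assms in simp)

lemma FS: "frontier S \<subseteq> S"
  using closedS by (simp add: frontier_subset_closed)

lemma hpos: "x \<in> S \<Longrightarrow> h \<bullet> x > 0"
  using hS[of x] by simp

lemma hF: "x \<in> frontier S \<Longrightarrow> h \<bullet> x > 0"
  using FS hpos by blast

lemma hnz: "h \<bullet> h > 0"
proof -
  obtain x where "x \<in> S" using nonemptyS by blast
  then have "h \<bullet> x > 0" by (rule hpos)
  then have "h \<noteq> 0" by auto
  then show ?thesis by simp
qed

lemma star: assumes "x \<in> S" "c > 1" shows "c *\<^sub>R x \<notin> frontier S"
  using ps assms by (auto simp: prop_star_def)

lemma radial:
  assumes u: "u \<in> frontier S" and cu: "c *\<^sub>R u \<in> frontier S" and c: "c > 0"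
  shows "c = 1"
proof (rule ccontr)
  assume "c \<noteq> 1"
  then consider "c > 1" | "c < 1" by linarith
  then show False
  proof cases
    case 1 then show False using star[of u c] u cu FS by blast
  next
    case 2
    have "(1/c) *\<^sub>R (c *\<^sub>R u) = u" using c by simp
    moreover have "1/c > 1" using 2 c by simp
    ultimately show False using star[of "c *\<^sub>R u" "1/c"] u cu FS by auto
  qed
qed

definition ta :: "real \<times> real \<Rightarrow> real" where
  "ta p = (rot h \<bullet> p) / (h \<bullet> p)"

lemma ta_scale: "c > 0 \<Longrightarrow> ta (c *\<^sub>R p) = ta p"
  by (simp add: ta_def)

lemma rot_ta: "h \<bullet> p > 0 \<Longrightarrow> rot h \<bullet> p = ta p * (h \<bullet> p)"
  by (simp add: ta_def)

lemma cr_ta: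
  assumes "h \<bullet> p > 0" "h \<bullet> q > 0"
  shows "cr p q = (h \<bullet> p) * (h \<bullet> q) * (ta q - ta p) / (h \<bullet> h)"
proof -
  have "(h \<bullet> h) * cr p q = (h \<bullet> p) * (h \<bullet> q) * (ta q - ta p)"
    unfolding cr_identity using assms by (simp add: rot_ta algebra_simps)
  then show ?thesis using hnz by (simp add: field_simps)
qed

lemma sgn_cr:
  assumes "h \<bullet> p > 0" "h \<bullet> q > 0"
  shows "sgn (cr p q) = sgn (ta q - ta p)"
proof -
  define C where "C = (h \<bullet> p) * (h \<bullet> q) / (h \<bullet> h)"
  have "cr p q = C * (ta q - ta p)" by (simp add: cr_ta[OF assms] C_def)
  moreover have "C > 0" using assms hnz by (simp add: C_def)
  ultimately show ?thesis by (simp add: sgn_mult)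
qed

lemma cr_pos_iff:
  assumes "h \<bullet> p > 0" "h \<bullet> q > 0"
  shows "cr p q > 0 \<longleftrightarrow> ta p < ta q" and "cr p q = 0 \<longleftrightarrow> ta p = ta q" and "cr p q < 0 \<longleftrightarrow> ta q < ta p"
  using sgn_cr[OF assms] by (auto simp: sgn_if split: if_splits)

lemma parallel:
  assumes p: "h \<bullet> p > 0" and q: "h \<bullet> q > 0" and eq: "ta p = ta q"
  shows "q = ((h \<bullet> q) / (h \<bullet> p)) *\<^sub>R p"
proof -
  define w where "w = q - ((h \<bullet> q) / (h \<bullet> p)) *\<^sub>R p"
  have "h \<bullet> w = 0" using p by (simp add: w_def inner_diff_right)
  moreover have "cr p w = 0" using cr_pos_iff(2)[OF p q] eq by (simp add: w_def cr_diff_right)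
  ultimately have "w = 0" using zero_2d[of h w p] p by simp
  then show ?thesis by (simp add: w_def)
qed

lemma mediant:
  assumes u: "h \<bullet> u > 0" and v: "h \<bullet> v > 0" and le: "ta u \<le> ta v"
    and a: "a \<ge> 0" and b: "b \<ge> 0" and ab: "a + b > 0"
  shows "h \<bullet> (a *\<^sub>R u + b *\<^sub>R v) > 0" "ta u \<le> ta (a *\<^sub>R u + b *\<^sub>R v)" "ta (a *\<^sub>R u + b *\<^sub>R v) \<le> ta v"
proof -
  have H: "h \<bullet> (a *\<^sub>R u + b *\<^sub>R v) = a * (h \<bullet> u) + b * (h \<bullet> v)" by (simp add: inner_add_right)
  have K: "rot h \<bullet> (a *\<^sub>R u + b *\<^sub>R v) = a * (ta u * (h \<bullet> u)) + b * (ta v * (h \<bullet> v))"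
    using u v by (simp add: inner_add_right rot_ta)
  have pos: "a * (h \<bullet> u) + b * (h \<bullet> v) > 0"
  proof (cases "a > 0")
    case True then show ?thesis using u v b by (simp add: add_pos_nonneg)
  next
    case False then have "b > 0" using a ab by simp
    then show ?thesis using u v a by (simp add: add_nonneg_pos)
  qed
  show "h \<bullet> (a *\<^sub>R u + b *\<^sub>R v) > 0" using H pos by simp
  have "ta u * (a * (h \<bullet> u) + b * (h \<bullet> v)) \<le> a * (ta u * (h \<bullet> u)) + b * (ta v * (h \<bullet> v))"
    using le b v by (simp add: algebra_simps mult_left_mono mult_right_mono)
  then show "ta u \<le> ta (a *\<^sub>R u + b *\<^sub>R v)"
    unfolding ta_def H K using pos by (simp add: pos_le_divide_eq)
  have "a * (ta u * (h \<bullet> u)) + b * (ta v * (h \<bullet> v)) \<le> ta v * (a * (h \<bullet> u) + b * (h \<bullet> v))"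
    using le a u by (simp add: algebra_simps mult_left_mono mult_right_mono)
  then show "ta (a *\<^sub>R u + b *\<^sub>R v) \<le> ta v"
    unfolding ta_def H K using pos by (simp add: pos_divide_le_eq)
qed

lemma cone_ta:
  assumes u: "h \<bullet> u > 0" and v: "h \<bullet> v > 0" and f: "h \<bullet> f > 0"
    and a: "a \<ge> 0" and b: "b \<ge> 0" and fe: "f = a *\<^sub>R u + b *\<^sub>R v"
  shows "min (ta u) (ta v) \<le> ta f \<and> ta f \<le> max (ta u) (ta v)"
proof -
  have ab: "a + b > 0"
  proof (rule ccontr)
    assume "\<not> a + b > 0" then have "a = 0" "b = 0" using a b by auto
    then show False using f fe by simp
  qed
  show ?thesis
  proof (cases "ta u \<le> ta v")
    case True then show ?thesis using mediant[OF u v True a b ab] fe by simp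
  next
    case False
    then have "ta v \<le> ta u" by simp
    from mediant[OF v u this b a] ab fe False show ?thesis by (simp add: add.commute)
  qed
qed

lemma ta_cone:
  assumes u: "h \<bullet> u > 0" and v: "h \<bullet> v > 0" and f: "h \<bullet> f > 0"
    and bt: "min (ta u) (ta v) \<le> ta f" "ta f \<le> max (ta u) (ta v)"
  shows "\<exists>a b. a \<ge> 0 \<and> b \<ge> 0 \<and> f = a *\<^sub>R u + b *\<^sub>R v"
proof (cases "ta u = ta v")
  case True
  then have "ta u = ta f" using bt by simp
  then have "f = ((h \<bullet> f) / (h \<bullet> u)) *\<^sub>R u" using parallel[OF u f] by simp
  moreover have "(h \<bullet> f) / (h \<bullet> u) \<ge> 0" using u f by simp
  ultimately show ?thesis by (intro exI[of _ "(h \<bullet> f) / (h \<bullet> u)"] exI[of _ 0]) simp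
next
  case False
  have cuv: "cr u v \<noteq> 0" using cr_pos_iff(2)[OF u v] False by simp
  have eq: "f = (cr f v / cr u v) *\<^sub>R u + (cr u f / cr u v) *\<^sub>R v"
  proof -
    have "cr u v *\<^sub>R f = cr f v *\<^sub>R u + cr u f *\<^sub>R v" by (rule cramer)
    then have "(1 / cr u v) *\<^sub>R (cr u v *\<^sub>R f) = (1 / cr u v) *\<^sub>R (cr f v *\<^sub>R u + cr u f *\<^sub>R v)" by simp
    then show ?thesis using cuv by (simp add: scaleR_add_right divide_inverse mult.commute)
  qed
  have nn: "cr f v / cr u v \<ge> 0 \<and> cr u f / cr u v \<ge> 0"
  proof (cases "ta u < ta v")
    case True
    then have "cr u v > 0" using cr_pos_iff(1)[OF u v] by simp
    moreover have "cr f v \<ge> 0" using cr_pos_iff[OF f v] bt True by (cases "ta f = ta v") auto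
    moreover have "cr u f \<ge> 0" using cr_pos_iff[OF u f] bt True by (cases "ta f = ta u") auto
    ultimately show ?thesis by simp
  next
    case F2: False
    then have "ta v < ta u" using False by simp
    then have "cr u v < 0" using cr_pos_iff(3)[OF u v] by simp
    moreover have "cr f v \<le> 0" using cr_pos_iff[OF f v] bt \<open>ta v < ta u\<close> by (cases "ta f = ta v") auto
    moreover have "cr u f \<le> 0" using cr_pos_iff[OF u f] bt \<open>ta v < ta u\<close> by (cases "ta f = ta u") auto
    ultimately show ?thesis by (simp add: divide_nonpos_neg)
  qed
  show ?thesis using eq nn by blast
qed

end

context good begin

definition Sec :: "real \<Rightarrow> real \<Rightarrow> (real \<times> real) set" where
  "Sec a b = {s *\<^sub>R u | s u. 0 \<le> s \<and> s \<le> 1 \<and> u \<in> frontier S \<and> a \<le> ta u \<and> ta u \<le> b}"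

lemma SecI: "0 \<le> s \<Longrightarrow> s \<le> 1 \<Longrightarrow> f \<in> frontier S \<Longrightarrow> a \<le> ta f \<Longrightarrow> ta f \<le> b \<Longrightarrow> s *\<^sub>R f \<in> Sec a b"
  unfolding Sec_def by blast

lemma SecE:
  assumes "x \<in> Sec a b"
  obtains s f where "x = s *\<^sub>R f" "0 \<le> s" "s \<le> 1" "f \<in> frontier S" "a \<le> ta f" "ta f \<le> b"
  using assms unfolding Sec_def by blast

lemma sector_eq:
  assumes w: "w \<in> frontier S"
  shows "sector S w0 w = Sec (min (ta w0) (ta w)) (max (ta w0) (ta w))"
proof -
  have "(\<exists>\<alpha> \<beta>. \<alpha> \<ge> 0 \<and> \<beta> \<ge> 0 \<and> u = \<alpha> *\<^sub>R w0 + \<beta> *\<^sub>R w) \<longleftrightarrow>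
        min (ta w0) (ta w) \<le> ta u \<and> ta u \<le> max (ta w0) (ta w)" if u: "u \<in> frontier S" for u
  proof
    assume "\<exists>\<alpha> \<beta>. \<alpha> \<ge> 0 \<and> \<beta> \<ge> 0 \<and> u = \<alpha> *\<^sub>R w0 + \<beta> *\<^sub>R w"
    then obtain \<alpha> \<beta> where "\<alpha> \<ge> 0" "\<beta> \<ge> 0" "u = \<alpha> *\<^sub>R w0 + \<beta> *\<^sub>R w" by blast
    then show "min (ta w0) (ta w) \<le> ta u \<and> ta u \<le> max (ta w0) (ta w)"
      using cone_ta[OF hF[OF w0F] hF[OF w] hF[OF u]] by blast
  next
    assume "min (ta w0) (ta w) \<le> ta u \<and> ta u \<le> max (ta w0) (ta w)"
    then show "\<exists>\<alpha> \<beta>. \<alpha> \<ge> 0 \<and> \<beta> \<ge> 0 \<and> u = \<alpha> *\<^sub>R w0 + \<beta> *\<^sub>R w"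
      using ta_cone[OF hF[OF w0F] hF[OF w] hF[OF u]] by blast
  qed
  then show ?thesis unfolding sector_def Sec_def by blast
qed

lemma chord:
  assumes u: "u \<in> frontier S" and v: "v \<in> frontier S" and f: "f \<in> frontier S"
    and a: "a \<ge> 0" and b: "b \<ge> 0" and fe: "f = a *\<^sub>R u + b *\<^sub>R v"
  shows "a + b \<le> 1"
proof (rule ccontr)
  assume "\<not> a + b \<le> 1"
  then have c: "a + b > 1" by simp
  define p where "p = (a / (a + b)) *\<^sub>R u + (b / (a + b)) *\<^sub>R v"
  have "p \<in> S"
    unfolding p_def
    using convexD[OF convexS, of u v "a / (a + b)" "b / (a + b)"] u v FS a b c
    by (auto simp: add_divide_distrib[symmetric])
  moreover have "(a + b) *\<^sub>R p = f" using c by (simp add: p_def fe scaleR_add_right)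
  ultimately show False using star[of p "a + b"] c f by simp
qed

lemma Sec_tri:
  assumes u: "u \<in> frontier S" and v: "v \<in> frontier S" and le: "ta u \<le> ta v"
  shows "Sec (ta u) (ta v) \<subseteq> tri u v"
proof
  fix x assume "x \<in> Sec (ta u) (ta v)"
  then obtain s f where x: "x = s *\<^sub>R f" and s: "0 \<le> s" "s \<le> 1" and f: "f \<in> frontier S"
    and ft: "ta u \<le> ta f" "ta f \<le> ta v"
    unfolding Sec_def by blast
  have "min (ta u) (ta v) \<le> ta f" "ta f \<le> max (ta u) (ta v)" using ft le by auto
  then obtain a b where ab: "a \<ge> 0" "b \<ge> 0" "f = a *\<^sub>R u + b *\<^sub>R v"
    using ta_cone[OF hF[OF u] hF[OF v] hF[OF f]] by blast
  have "a + b \<le> 1" using chord[OF u v f ab] .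
  then have "s * (a + b) \<le> 1" using s ab by (intro mult_le_one) auto
  then have "s * a + s * b \<le> 1" by (simp add: distrib_left)
  moreover have "x = (s * a) *\<^sub>R u + (s * b) *\<^sub>R v" using x ab by (simp add: scaleR_add_right)
  ultimately show "x \<in> tri u v" unfolding tri_def using s ab
    by (intro CollectI exI[of _ "s * a"] exI[of _ "s * b"]) auto
qed

lemma continuous_ta: "continuous_on (frontier S) ta"
  unfolding ta_def
  by (intro continuous_intros) (use hF in force)

lemma Sec_compact:
  assumes u: "u \<in> frontier S" and v: "v \<in> frontier S" and le: "ta u \<le> ta v"
  shows "compact (Sec (ta u) (ta v))"
proof -
  define K where "K = frontier S \<inter> ta -` {ta u..ta v}"
  have "closed K" unfolding K_def
    by (rule continuous_closed_preimage[OF continuous_ta]) auto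
  moreover have "K \<subseteq> tri u v"
  proof
    fix f assume "f \<in> K"
    then have "f \<in> frontier S" "ta u \<le> ta f" "ta f \<le> ta v" by (auto simp: K_def)
    then have "f \<in> Sec (ta u) (ta v)" unfolding Sec_def
      by (intro CollectI exI[of _ "1::real"] exI[of _ f]) simp
    then show "f \<in> tri u v" using Sec_tri[OF u v le] by blast
  qed
  ultimately have "compact K"
    using compact_tri[of u v] by (meson bounded_subset compact_eq_bounded_closed)
  then have cK: "compact ({0..1::real} \<times> K)" by (intro compact_Times) auto
  have eq: "Sec (ta u) (ta v) = (\<lambda>z. fst z *\<^sub>R snd z) ` ({0..1} \<times> K)"
    unfolding Sec_def K_def by (auto simp: image_iff) force+
  show ?thesis unfolding eq
    by (rule compact_continuous_image[OF _ cK]) (intro continuous_intros)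
qed

lemma first_point:
  assumes r0: "r0 > 0" and pS: "r0 *\<^sub>R p \<in> S"
  shows "\<exists>r>0. r *\<^sub>R p \<in> frontier S \<and> (\<forall>r'. 0 \<le> r' \<and> r' < r \<longrightarrow> r' *\<^sub>R p \<notin> S)"
proof -
  define R where "R = {r. r \<ge> 0 \<and> r *\<^sub>R p \<in> S}"
  have "closed R"
  proof -
    have "closed ({0..} \<inter> (\<lambda>r. r *\<^sub>R p) -` S)"
      by (rule continuous_closed_preimage) (auto intro: continuous_intros closedS)
    moreover have "R = {0..} \<inter> (\<lambda>r. r *\<^sub>R p) -` S" unfolding R_def by auto
    ultimately show ?thesis by simp
  qed
  have "r0 \<in> R" using r0 pS unfolding R_def by simp
  then have ne: "R \<noteq> {}" by blast
  have bdd: "bdd_below R" unfolding R_def by (auto intro: bdd_belowI[of _ 0])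
  define r where "r = Inf R"
  have rR: "r \<in> R" unfolding r_def using closed_contains_Inf[OF ne bdd \<open>closed R\<close>] .
  then have rS: "r *\<^sub>R p \<in> S" and r0': "r \<ge> 0" unfolding R_def by auto
  have "r \<noteq> 0" using rS zeroS by auto
  then have rpos: "r > 0" using r0' by simp
  have below: "r' *\<^sub>R p \<notin> S" if "0 \<le> r'" "r' < r" for r'
  proof
    assume "r' *\<^sub>R p \<in> S"
    then have "r' \<in> R" using that unfolding R_def by auto
    then have "r \<le> r'" unfolding r_def using bdd by (rule cInf_lower)
    then show False using that by simp
  qed
  have pnz: "p \<noteq> 0" using rS zeroS by auto
  have "r *\<^sub>R p \<notin> interior S"
  proof
    assume "r *\<^sub>R p \<in> interior S"
    then obtain e where e: "e > 0" "ball (r *\<^sub>R p) e \<subseteq> S" using mem_interior by blast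
    define d where "d = min (r / 2) (e / (2 * norm p))"
    have d: "d > 0" "d \<le> r / 2" "d * norm p \<le> e / 2"
      using rpos e pnz by (auto simp: d_def min_def field_simps)
    have "dist ((r - d) *\<^sub>R p) (r *\<^sub>R p) = d * norm p"
      using d by (simp add: dist_norm algebra_simps)
    then have "(r - d) *\<^sub>R p \<in> ball (r *\<^sub>R p) e" using d e by (simp add: dist_commute)
    then have "(r - d) *\<^sub>R p \<in> S" using e by blast
    moreover have "0 \<le> r - d" "r - d < r" using d by auto
    ultimately show False using below by blast
  qed
  then have "r *\<^sub>R p \<in> frontier S" using rS closedS by (simp add: frontier_def)
  then show ?thesis using rpos below by blast
qed

lemma tri_Sec:
  assumes l: "\<And>x. x \<in> S \<Longrightarrow> l \<bullet> x \<ge> 1"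
    and u: "u \<in> frontier S" and v: "v \<in> frontier S" and le: "ta u \<le> ta v"
    and c1: "c1 > 0" and c2: "c2 > 0" and l1: "l \<bullet> (c1 *\<^sub>R u) = 1" and l2: "l \<bullet> (c2 *\<^sub>R v) = 1"
  shows "tri (c1 *\<^sub>R u) (c2 *\<^sub>R v) \<subseteq> Sec (ta u) (ta v)"
proof
  fix x assume "x \<in> tri (c1 *\<^sub>R u) (c2 *\<^sub>R v)"
  then obtain \<alpha> \<beta> where x: "x = \<alpha> *\<^sub>R (c1 *\<^sub>R u) + \<beta> *\<^sub>R (c2 *\<^sub>R v)" and ab: "\<alpha> \<ge> 0" "\<beta> \<ge> 0" "\<alpha> + \<beta> \<le> 1"
    unfolding tri_def by blast
  show "x \<in> Sec (ta u) (ta v)"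
  proof (cases "\<alpha> + \<beta> = 0")
    case True
    then have "\<alpha> = 0" "\<beta> = 0" using ab by linarith+
    then have "x = 0 *\<^sub>R u" using x by simp
    then show ?thesis unfolding Sec_def using u le by (intro CollectI exI[of _ "0::real"] exI[of _ u]) simp
  next
    case False
    then have abp: "\<alpha> + \<beta> > 0" using ab by simp
    define a' where "a' = \<alpha> * c1"
    define b' where "b' = \<beta> * c2"
    have a'b'1: "a' \<ge> 0" "b' \<ge> 0"
      using ab c1 c2 unfolding a'_def b'_def by auto
    have "a' + b' > 0"
    proof (cases "\<alpha> > 0")
      case True then have "a' > 0" using c1 by (simp add: a'_def)
      then show ?thesis using a'b'1 by simp
    next
      case False then have "\<beta> > 0" using ab abp by simp
      then have "b' > 0" using c2 by (simp add: b'_def)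
      then show ?thesis using a'b'1 by simp
    qed
    note a'b' = a'b'1 this
    have xe: "x = a' *\<^sub>R u + b' *\<^sub>R v" using x by (simp add: a'_def b'_def)
    define m where "m = a' + b'"
    have m: "m > 0" using a'b' by (simp add: m_def)
    have "(1 / m) *\<^sub>R x \<in> S"
    proof -
      have "(a' / m) *\<^sub>R u + (b' / m) *\<^sub>R v \<in> S"
        using convexD[OF convexS, of u v "a' / m" "b' / m"] u v FS a'b' m
        by (auto simp: m_def add_divide_distrib[symmetric])
      moreover have "(1 / m) *\<^sub>R x = (a' / m) *\<^sub>R u + (b' / m) *\<^sub>R v"
        by (simp add: xe scaleR_add_right)
      ultimately show ?thesis by simp
    qed
    then obtain r where r: "r > 0" "r *\<^sub>R x \<in> frontier S"
      using first_point[of "1/m" x] m by auto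
    have "l \<bullet> x = \<alpha> * (c1 * (l \<bullet> u)) + \<beta> * (c2 * (l \<bullet> v))"
      by (simp add: x inner_add_right algebra_simps)
    then have lx: "l \<bullet> x = \<alpha> + \<beta>" using l1 l2 by simp
    have "l \<bullet> (r *\<^sub>R x) \<ge> 1" using l r FS by blast
    then have "r * (\<alpha> + \<beta>) \<ge> 1" using lx by simp
    moreover have "r * (\<alpha> + \<beta>) \<le> r" using ab r by (intro mult_left_le) auto
    ultimately have "r \<ge> 1" by linarith
    have med: "ta u \<le> ta x" "ta x \<le> ta v"
      using mediant[OF hF[OF u] hF[OF v] le a'b'] xe by auto
    have "x = (1 / r) *\<^sub>R (r *\<^sub>R x)" using r by simp
    moreover have "ta (r *\<^sub>R x) = ta x" using r by (simp add: ta_scale)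
    moreover have "0 \<le> 1 / r" "1 / r \<le> 1" using r \<open>r \<ge> 1\<close> by auto
    ultimately show ?thesis using SecI[of "1/r" "r *\<^sub>R x" "ta u" "ta v"] r med by simp
  qed
qed

definition Mu :: "real \<Rightarrow> real \<Rightarrow> real" where
  "Mu a b = measure lebesgue (Sec a b)"

lemma Mu_le:
  assumes u: "u \<in> frontier S" and v: "v \<in> frontier S" and le: "ta u \<le> ta v"
  shows "Mu (ta u) (ta v) \<le> \<bar>cr u v\<bar> / 2"
proof -
  have "Mu (ta u) (ta v) \<le> measure lebesgue (tri u v)"
    unfolding Mu_def
    by (rule measure_mono_fmeasurable[OF Sec_tri[OF u v le]])
       (use Sec_compact[OF u v le] compact_tri[of u v] in \<open>auto intro: lmeasurable_compact fmeasurableD\<close>)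
  then show ?thesis by (simp add: measure_tri cr_def)
qed

lemma Mu_ge:
  assumes l: "\<And>x. x \<in> S \<Longrightarrow> l \<bullet> x \<ge> 1"
    and u: "u \<in> frontier S" and v: "v \<in> frontier S" and le: "ta u \<le> ta v"
    and c1: "c1 > 0" and c2: "c2 > 0" and l1: "l \<bullet> (c1 *\<^sub>R u) = 1" and l2: "l \<bullet> (c2 *\<^sub>R v) = 1"
  shows "c1 * c2 * \<bar>cr u v\<bar> / 2 \<le> Mu (ta u) (ta v)"
proof -
  have "measure lebesgue (tri (c1 *\<^sub>R u) (c2 *\<^sub>R v)) \<le> Mu (ta u) (ta v)"
    unfolding Mu_def
    by (rule measure_mono_fmeasurable[OF tri_Sec[OF l u v le c1 c2 l1 l2]])
       (use Sec_compact[OF u v le] compact_tri[of "c1 *\<^sub>R u" "c2 *\<^sub>R v"] in \<open>auto intro: lmeasurable_compact fmeasurableD\<close>)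
  moreover have "measure lebesgue (tri (c1 *\<^sub>R u) (c2 *\<^sub>R v)) = c1 * c2 * \<bar>cr u v\<bar> / 2"
  proof -
    have "fst (c1 *\<^sub>R u) * snd (c2 *\<^sub>R v) - snd (c1 *\<^sub>R u) * fst (c2 *\<^sub>R v) = (c1 * c2) * cr u v"
      by (simp add: cr_def algebra_simps)
    then show ?thesis using c1 c2 by (simp add: measure_tri abs_mult)
  qed
  ultimately show ?thesis by simp
qed

lemma Mu_nonneg: "Mu a b \<ge> 0"
  by (simp add: Mu_def)

lemma Mu_refl: assumes u: "u \<in> frontier S" shows "Mu (ta u) (ta u) = 0"
  using Mu_le[OF u u] Mu_nonneg[of "ta u" "ta u"] by simp

lemma Mu_add:
  assumes u: "u \<in> frontier S" and v: "v \<in> frontier S" and w: "w \<in> frontier S"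
    and uv: "ta u \<le> ta v" and vw: "ta v \<le> ta w"
  shows "Mu (ta u) (ta w) = Mu (ta u) (ta v) + Mu (ta v) (ta w)"
proof -
  have un: "Sec (ta u) (ta w) = Sec (ta u) (ta v) \<union> Sec (ta v) (ta w)"
  proof
    show "Sec (ta u) (ta w) \<subseteq> Sec (ta u) (ta v) \<union> Sec (ta v) (ta w)"
    proof
      fix x assume "x \<in> Sec (ta u) (ta w)"
      then obtain s f where "x = s *\<^sub>R f" "0 \<le> s" "s \<le> 1" "f \<in> frontier S" "ta u \<le> ta f" "ta f \<le> ta w"
        by (rule SecE)
      then show "x \<in> Sec (ta u) (ta v) \<union> Sec (ta v) (ta w)"
        using SecI[of s f "ta u" "ta v"] SecI[of s f "ta v" "ta w"] by (cases "ta f \<le> ta v") auto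
    qed
    show "Sec (ta u) (ta v) \<union> Sec (ta v) (ta w) \<subseteq> Sec (ta u) (ta w)"
    proof
      fix x assume "x \<in> Sec (ta u) (ta v) \<union> Sec (ta v) (ta w)"
      then show "x \<in> Sec (ta u) (ta w)"
      proof
        assume "x \<in> Sec (ta u) (ta v)"
        then show ?thesis by (rule SecE) (use uv vw SecI in auto)
      next
        assume "x \<in> Sec (ta v) (ta w)"
        then show ?thesis by (rule SecE) (use uv vw SecI in auto)
      qed
    qed
  qed
  have int: "Sec (ta u) (ta v) \<inter> Sec (ta v) (ta w) \<subseteq> {x. rot v \<bullet> x = 0}"
  proof
    fix x assume x: "x \<in> Sec (ta u) (ta v) \<inter> Sec (ta v) (ta w)"
    then obtain s f where sf: "x = s *\<^sub>R f" "0 \<le> s" "f \<in> frontier S" "ta f \<le> ta v"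
      by (metis IntD1 SecE)
    from x obtain s' f' where sf': "x = s' *\<^sub>R f'" "0 \<le> s'" "f' \<in> frontier S" "ta v \<le> ta f'"
      by (metis IntD2 SecE)
    show "x \<in> {x. rot v \<bullet> x = 0}"
    proof (cases "s = 0 \<or> s' = 0")
      case True then show ?thesis using sf sf' by auto
    next
      case False
      then have "s > 0" "s' > 0" using sf sf' by auto
      have t1: "ta x = ta f" unfolding sf(1) by (rule ta_scale) fact
      have t2: "ta x = ta f'" unfolding sf'(1) by (rule ta_scale) fact
      note t1 t2
      then have "ta f = ta v" using sf sf' by simp
      then have "f = ((h \<bullet> f) / (h \<bullet> v)) *\<^sub>R v" using parallel[OF hF[OF v] hF[OF sf(3)]] by simp
      moreover have "rot v \<bullet> v = 0" by (simp add: rot_def inner_pair_expand)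
      ultimately have "rot v \<bullet> f = 0" by (metis inner_scaleR_right mult_zero_right)
      then show ?thesis using sf by simp
    qed
  qed
  have "v \<noteq> 0" using v FS zeroS by auto
  then have "rot v \<noteq> 0" by (auto simp: rot_def prod_eq_iff)
  then have "negligible {x. rot v \<bullet> x = 0}" by (intro negligible_hyperplane) simp
  then have neg: "measure lebesgue (Sec (ta u) (ta v) \<inter> Sec (ta v) (ta w)) = 0"
    using int negligible_subset negligible_imp_measure0 by blast
  have m1: "Sec (ta u) (ta v) \<in> fmeasurable lebesgue" using Sec_compact[OF u v uv] by (rule lmeasurable_compact)
  have m2: "Sec (ta v) (ta w) \<in> fmeasurable lebesgue" using Sec_compact[OF v w vw] by (rule lmeasurable_compact)
  show ?thesis unfolding Mu_def un using measure_Un3[OF m1 m2] neg by simp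
qed

lemma hang_eq:
  assumes w: "w \<in> frontier S"
  shows "hang S w0 w = (if ta w0 \<le> ta w then 2 * Mu (ta w0) (ta w) else - 2 * Mu (ta w) (ta w0))"
proof -
  have sg: "sgn (fst w0 * snd w - snd w0 * fst w) = sgn (ta w - ta w0)"
    using sgn_cr[OF hF[OF w0F] hF[OF w]] by (simp add: cr_def)
  consider "ta w0 < ta w" | "ta w0 = ta w" | "ta w < ta w0" by linarith
  then show ?thesis
  proof cases
    case 1 then show ?thesis unfolding hang_def sg sector_eq[OF w] Mu_def by simp
  next
    case 2 then show ?thesis unfolding hang_def sg sector_eq[OF w] using Mu_refl[OF w0F] by (simp add: Mu_def)
  next
    case 3 then show ?thesis unfolding hang_def sg sector_eq[OF w] Mu_def by simp
  qed
qed

lemma hang_diff: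
  assumes u: "u \<in> frontier S" and v: "v \<in> frontier S" and le: "ta u \<le> ta v"
  shows "hang S w0 v - hang S w0 u = 2 * Mu (ta u) (ta v)"
proof -
  consider "ta w0 \<le> ta u" | "ta u < ta w0" "ta w0 \<le> ta v" | "ta v < ta w0" by linarith
  then show ?thesis
  proof cases
    case 1 then show ?thesis using Mu_add[OF w0F u v 1 le] le by (simp add: hang_eq[OF u] hang_eq[OF v])
  next
    case 2 then show ?thesis using Mu_add[OF u w0F v] by (simp add: hang_eq[OF u] hang_eq[OF v])
  next
    case 3 then show ?thesis using Mu_add[OF u v w0F le] le by (simp add: hang_eq[OF u] hang_eq[OF v])
  qed
qed

lemma hang_inj_aux:
  assumes u: "u \<in> frontier S" and v: "v \<in> frontier S" and le: "ta u \<le> ta v"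
    and eq: "hang S w0 u = hang S w0 v"
  shows "u = v"
proof (cases "ta u = ta v")
  case True
  have hu: "h \<bullet> u > 0" and hv: "h \<bullet> v > 0" using hF u v by auto
  have "v = ((h \<bullet> v) / (h \<bullet> u)) *\<^sub>R u" using parallel[OF hu hv True] .
  moreover have "(h \<bullet> v) / (h \<bullet> u) > 0" using hu hv by simp
  ultimately have "(h \<bullet> v) / (h \<bullet> u) = 1" using radial[OF u] v by metis
  then show ?thesis using \<open>v = _\<close> by simp
next
  case False
  then have lt: "ta u < ta v" using le by simp
  have hu: "h \<bullet> u > 0" and hv: "h \<bullet> v > 0" using hF u v by auto
  have "cr u v > 0" using cr_pos_iff(1)[OF hu hv] lt by simp
  have "(1 / (h \<bullet> u)) * (1 / (h \<bullet> v)) * \<bar>cr u v\<bar> / 2 \<le> Mu (ta u) (ta v)"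
    by (rule Mu_ge[OF hS u v le]) (use hu hv in auto)
  moreover have "(1 / (h \<bullet> u)) * (1 / (h \<bullet> v)) * \<bar>cr u v\<bar> / 2 > 0"
    using hu hv \<open>cr u v > 0\<close> by simp
  ultimately have "Mu (ta u) (ta v) > 0" by linarith
  then show ?thesis using hang_diff[OF u v le] eq by simp
qed

lemma hang_inj:
  assumes u: "u \<in> frontier S" and v: "v \<in> frontier S" and eq: "hang S w0 u = hang S w0 v"
  shows "u = v"
proof (cases "ta u \<le> ta v")
  case True then show ?thesis using hang_inj_aux[OF u v True eq] by blast
next
  case False then show ?thesis using hang_inj_aux[OF v u _ eq[symmetric]] by simp
qed

lemma hpoint_hang:
  assumes w: "w \<in> frontier S"
  shows "hpoint S w0 (hang S w0 w) = w"
  unfolding hpoint_def by (rule the_equality) (use w hang_inj in auto)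

lemma hdom_hpoint:
  assumes "\<theta> \<in> hdom S w0"
  shows "hpoint S w0 \<theta> \<in> frontier S \<and> hang S w0 (hpoint S w0 \<theta>) = \<theta>"
proof -
  obtain w where w: "w \<in> frontier S" "\<theta> = hang S w0 w" using assms unfolding hdom_def by blast
  then show ?thesis using hpoint_hang[OF w(1)] by simp
qed

lemma hang_bounds:
  assumes l: "\<And>x. x \<in> S \<Longrightarrow> l \<bullet> x \<ge> 1"
    and u: "u \<in> frontier S" and v: "v \<in> frontier S" and lu: "l \<bullet> u = 1"
  shows "\<bar>hang S w0 v - hang S w0 u\<bar> \<le> \<bar>cr u v\<bar>"
    and "\<bar>hang S w0 v - hang S w0 u - cr u v\<bar> \<le> \<bar>cr u v\<bar> * (l \<bullet> v - 1)"
proof -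
  have hu: "h \<bullet> u > 0" and hv: "h \<bullet> v > 0" using hF u v by auto
  have L: "l \<bullet> v \<ge> 1" using l v FS by blast
  define L where "L = l \<bullet> v"
  have Lp: "L > 0" using L by (simp add: L_def)
  have key: "1 - 1 / L \<le> L - 1"
  proof -
    have "(L - 1) * (L - 1) \<ge> 0" by simp
    then have "L - 1 \<le> (L - 1) * L" by (simp add: algebra_simps)
    then show ?thesis using Lp by (simp add: field_simps)
  qed
  have "\<exists>D. \<bar>hang S w0 v - hang S w0 u\<bar> = D \<and> \<bar>hang S w0 v - hang S w0 u - cr u v\<bar> = \<bar>\<bar>cr u v\<bar> - D\<bar>
            \<and> \<bar>cr u v\<bar> / L \<le> D \<and> D \<le> \<bar>cr u v\<bar>"
  proof (cases "ta u \<le> ta v")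
    case True
    have d: "hang S w0 v - hang S w0 u = 2 * Mu (ta u) (ta v)" using hang_diff[OF u v True] .
    have c: "cr u v \<ge> 0" using cr_pos_iff[OF hu hv] True by (cases "ta u = ta v") auto
    have up: "2 * Mu (ta u) (ta v) \<le> \<bar>cr u v\<bar>" using Mu_le[OF u v True] by simp
    have "1 * (1 / L) * \<bar>cr u v\<bar> / 2 \<le> Mu (ta u) (ta v)"
      by (rule Mu_ge[OF l u v True]) (use lu Lp in \<open>auto simp: L_def\<close>)
    then have lo: "\<bar>cr u v\<bar> / L \<le> 2 * Mu (ta u) (ta v)" by simp
    show ?thesis using d c up lo Mu_nonneg[of "ta u" "ta v"]
      by (intro exI[of _ "2 * Mu (ta u) (ta v)"]) auto
  next
    case False
    then have le': "ta v \<le> ta u" by simp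
    have d: "hang S w0 v - hang S w0 u = - (2 * Mu (ta v) (ta u))" using hang_diff[OF v u le'] by simp
    have "ta v < ta u" using False by simp
    then have c: "cr u v < 0" using cr_pos_iff(3)[OF hu hv] by blast
    have sw: "\<bar>cr v u\<bar> = \<bar>cr u v\<bar>" by (simp add: cr_def abs_minus_commute mult.commute)
    have up: "2 * Mu (ta v) (ta u) \<le> \<bar>cr u v\<bar>" using Mu_le[OF v u le'] sw by simp
    have "(1 / L) * 1 * \<bar>cr v u\<bar> / 2 \<le> Mu (ta v) (ta u)"
      by (rule Mu_ge[OF l v u le']) (use lu Lp in \<open>auto simp: L_def\<close>)
    then have lo: "\<bar>cr u v\<bar> / L \<le> 2 * Mu (ta v) (ta u)" using sw by simp
    show ?thesis using d c up lo Mu_nonneg[of "ta v" "ta u"]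
      by (intro exI[of _ "2 * Mu (ta v) (ta u)"]) auto
  qed
  then obtain D where D: "\<bar>hang S w0 v - hang S w0 u\<bar> = D"
    "\<bar>hang S w0 v - hang S w0 u - cr u v\<bar> = \<bar>\<bar>cr u v\<bar> - D\<bar>"
    "\<bar>cr u v\<bar> / L \<le> D" "D \<le> \<bar>cr u v\<bar>" by blast
  show "\<bar>hang S w0 v - hang S w0 u\<bar> \<le> \<bar>cr u v\<bar>" using D by simp
  have "\<bar>cr u v\<bar> - D \<le> \<bar>cr u v\<bar> * (1 - 1 / L)" using D(3) by (simp add: algebra_simps)
  also have "\<dots> \<le> \<bar>cr u v\<bar> * (L - 1)" using key by (simp add: mult_left_mono)
  finally show "\<bar>hang S w0 v - hang S w0 u - cr u v\<bar> \<le> \<bar>cr u v\<bar> * (l \<bullet> v - 1)"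
    using D(2) D(4) by (simp add: L_def)
qed

end

definition fl :: "real \<times> real \<Rightarrow> real \<times> real" where "fl g = (fst g, - snd g)"

lemma fl_inner: "fst g * fst z - snd g * snd z = fl g \<bullet> z"
  by (simp add: fl_def inner_pair_expand)
lemma fl_fl[simp]: "fl (fl g) = g" by (simp add: fl_def)
lemma norm_fl[simp]: "norm (fl g) = norm g" by (simp add: fl_def norm_prod_def)
lemma fl_scale: "fl (c *\<^sub>R g) = c *\<^sub>R fl g" by (simp add: fl_def)
lemma fl_diff: "fl (g - g') = fl g - fl g'" by (simp add: fl_def)
lemma fl_add: "fl (g + g') = fl g + fl g'" by (simp add: fl_def)
lemma fl_0[simp]: "fl 0 = 0" by (simp add: fl_def zero_prod_def)
lemma fl_comm: "fl g \<bullet> w = fl w \<bullet> g" by (simp add: fl_def inner_pair_expand mult.commute)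
lemma fl_eq0[simp]: "fl g = 0 \<longleftrightarrow> g = 0" by (auto simp: fl_def prod_eq_iff)
lemma fl_inner_swap: "fl g \<bullet> z = g \<bullet> fl z" by (simp add: fl_def inner_pair_expand)
lemma fl_bound: "\<bar>fl g \<bullet> z\<bar> \<le> norm g * norm z"
  using Cauchy_Schwarz_ineq2[of "fl g" z] by simp

lemma antipolar_iff: "g \<in> antipolar \<Omega> \<longleftrightarrow> (\<forall>w\<in>\<Omega>. fl g \<bullet> w \<ge> 1)"
  by (cases g) (auto simp: antipolar_def fl_def inner_pair_expand case_prod_beta)

lemma pos_coneI: "c \<ge> 0 \<Longrightarrow> w \<in> \<Omega> \<Longrightarrow> c *\<^sub>R w \<in> pos_cone \<Omega>"
  unfolding pos_cone_def by blast

lemma pos_cone_scale: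
  assumes c: "c \<ge> 0" and y: "y \<in> pos_cone \<Omega>" shows "c *\<^sub>R y \<in> pos_cone \<Omega>"
proof -
  obtain c' w where "y = c' *\<^sub>R w" "c' \<ge> 0" "w \<in> \<Omega>" using y unfolding pos_cone_def by blast
  then have "c *\<^sub>R y = (c * c') *\<^sub>R w" "c * c' \<ge> 0" using c by auto
  then show ?thesis using pos_coneI \<open>w \<in> \<Omega>\<close> by metis
qed

lemma exists_h:
  assumes "prop_i S"
  shows "\<exists>h. \<forall>x\<in>S. h \<bullet> x \<ge> 1"
proof -
  have "convex S" "closed S" "(0::real\<times>real) \<notin> S" using assms by (auto simp: prop_i_def)
  then obtain a b where ab: "a \<bullet> (0::real\<times>real) < b" "\<forall>x\<in>S. a \<bullet> x > b"
    using separating_hyperplane_closed_point by blast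
  then have b: "b > 0" by simp
  have "\<forall>x\<in>S. (1 / b) *\<^sub>R a \<bullet> x \<ge> 1"
    using ab b by (auto simp: field_simps less_imp_le)
  then show ?thesis by blast
qed

context
  fixes \<Omega> :: "(real \<times> real) set"
  assumes i: "prop_i \<Omega>" and star: "prop_star \<Omega>" and starstar: "prop_starstar \<Omega>"
begin

lemma Om_ne: "\<Omega> \<noteq> {}" and Om_0: "(0::real\<times>real) \<notin> \<Omega>" and Om_closed: "closed \<Omega>" and Om_convex: "convex \<Omega>"
  using i by (auto simp: prop_i_def)

lemma anti_closed: "closed (antipolar \<Omega>)"
proof -
  have "antipolar \<Omega> = (\<Inter>w\<in>\<Omega>. {g. fl w \<bullet> g \<ge> 1})"
    by (rule set_eqI) (simp add: antipolar_iff fl_comm)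
  also have "closed \<dots>" by (intro closed_INT ballI closed_halfspace_ge)
  finally show ?thesis .
qed

lemma anti_convex: "convex (antipolar \<Omega>)"
proof -
  have "antipolar \<Omega> = (\<Inter>w\<in>\<Omega>. {g. fl w \<bullet> g \<ge> 1})"
    by (rule set_eqI) (simp add: antipolar_iff fl_comm)
  also have "convex \<dots>" by (intro convex_INT ballI convex_halfspace_ge)
  finally show ?thesis .
qed

lemma anti_0: "(0::real\<times>real) \<notin> antipolar \<Omega>"
  using Om_ne by (auto simp: antipolar_iff)

lemma anti_scale: "c \<ge> 1 \<Longrightarrow> g \<in> antipolar \<Omega> \<Longrightarrow> c *\<^sub>R g \<in> antipolar \<Omega>"
proof -
  assume c: "c \<ge> 1" and g: "g \<in> antipolar \<Omega>"
  have "fl (c *\<^sub>R g) \<bullet> w \<ge> 1" if "w \<in> \<Omega>" for w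
  proof -
    have "fl g \<bullet> w \<ge> 1" using g that by (auto simp: antipolar_iff)
    then have "c * (fl g \<bullet> w) \<ge> 1 * 1" using c by (intro mult_mono) auto
    then show ?thesis by (simp add: fl_scale)
  qed
  then show ?thesis by (simp add: antipolar_iff)
qed

lemma cone_nonneg:
  assumes g: "g \<in> antipolar \<Omega>" and y: "y \<in> closure (pos_cone \<Omega>)"
  shows "fl g \<bullet> y \<ge> 0"
proof -
  have "pos_cone \<Omega> \<subseteq> {y. fl g \<bullet> y \<ge> 0}"
  proof
    fix y assume "y \<in> pos_cone \<Omega>"
    then obtain c w where "y = c *\<^sub>R w" "c \<ge> 0" "w \<in> \<Omega>" unfolding pos_cone_def by blast
    moreover have "fl g \<bullet> w \<ge> 1" using g \<open>w \<in> \<Omega>\<close> by (auto simp: antipolar_iff)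
    ultimately show "y \<in> {y. fl g \<bullet> y \<ge> 0}" by simp
  qed
  then have "closure (pos_cone \<Omega>) \<subseteq> {y. fl g \<bullet> y \<ge> 0}"
    by (intro closure_minimal) (auto intro: closed_halfspace_ge)
  then show ?thesis using y by blast
qed

lemma kappa:
  assumes g: "g \<in> antipolar \<Omega>"
  shows "\<exists>\<kappa>>0. \<forall>w\<in>\<Omega>. fl g \<bullet> w \<ge> \<kappa> * norm w"
proof -
  define C where "C = closure (pos_cone \<Omega>)"
  define K where "K = C \<inter> sphere 0 1"
  have gnz: "g \<noteq> 0"
  proof
    assume "g = 0"
    obtain w where w: "w \<in> \<Omega>" using Om_ne by blast
    then have "fl g \<bullet> w \<ge> 1" using g by (simp add: antipolar_iff)
    then show False using \<open>g = 0\<close> by simp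
  qed
  have cK: "compact K" unfolding K_def C_def by (intro closed_Int_compact) auto
  have neK: "K \<noteq> {}"
  proof -
    obtain w where w: "w \<in> \<Omega>" using Om_ne by blast
    then have "w \<noteq> 0" using Om_0 by auto
    have "(1 / norm w) *\<^sub>R w \<in> pos_cone \<Omega>" using w by (intro pos_coneI) auto
    then have "(1 / norm w) *\<^sub>R w \<in> K" unfolding K_def C_def using \<open>w \<noteq> 0\<close>
      by (auto intro: closure_subset[THEN subsetD])
    then show ?thesis by blast
  qed
  have "continuous_on K (\<lambda>d. fl g \<bullet> d)" by (intro continuous_intros)
  then obtain d0 where d0: "d0 \<in> K" and dmin: "\<And>d. d \<in> K \<Longrightarrow> fl g \<bullet> d0 \<le> fl g \<bullet> d"
    using continuous_attains_inf[OF cK neK, of "\<lambda>d. fl g \<bullet> d"] by blast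
  show ?thesis
  proof (cases "fl g \<bullet> d0 > 0")
    case True
    have "fl g \<bullet> w \<ge> (fl g \<bullet> d0) * norm w" if w: "w \<in> \<Omega>" for w
    proof -
      have "w \<noteq> 0" using w Om_0 by auto
      have "(1 / norm w) *\<^sub>R w \<in> pos_cone \<Omega>" using w by (intro pos_coneI) auto
      then have "(1 / norm w) *\<^sub>R w \<in> K" unfolding K_def C_def using \<open>w \<noteq> 0\<close>
        by (auto intro: closure_subset[THEN subsetD])
      then have "fl g \<bullet> d0 \<le> fl g \<bullet> ((1 / norm w) *\<^sub>R w)" by (rule dmin)
      then show ?thesis using \<open>w \<noteq> 0\<close> by (simp add: field_simps)
    qed
    then show ?thesis using True by blast
  next
    case False
    have "fl g \<bullet> d0 \<ge> 0" using cone_nonneg[OF g] d0 unfolding K_def C_def by blast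
    then have z: "fl g \<bullet> d0 = 0" using False by simp
    have d0C: "d0 \<in> C" and d0n: "norm d0 = 1" using d0 unfolding K_def by auto
    have rayC: "ray d0 \<subseteq> frontier C"
    proof
      fix y assume "y \<in> ray d0"
      then obtain t where t: "y = t *\<^sub>R d0" "t \<ge> 0" unfolding ray_def by blast
      have "(*\<^sub>R) t ` pos_cone \<Omega> \<subseteq> pos_cone \<Omega>" using t pos_cone_scale by blast
      then have "closure ((*\<^sub>R) t ` pos_cone \<Omega>) \<subseteq> C" unfolding C_def by (rule closure_mono)
      then have "(*\<^sub>R) t ` C \<subseteq> C" unfolding C_def by (simp add: closure_scaleR)
      then have yC: "y \<in> C" using t d0C by blast
      have fy: "fl g \<bullet> y = 0" using t z by simp
      have "y \<notin> interior C"
      proof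
        assume "y \<in> interior C"
        then obtain e where e: "e > 0" "ball y e \<subseteq> C" using mem_interior by blast
        define y' where "y' = y - (e / 2 / norm g) *\<^sub>R fl g"
        have "dist y y' = e / 2" using gnz e by (simp add: y'_def dist_norm)
        then have "y' \<in> C" using e by auto
        then have "fl g \<bullet> y' \<ge> 0" using cone_nonneg[OF g] unfolding C_def by blast
        moreover have "fl g \<bullet> y' = - (e / 2 / norm g) * (norm g)\<^sup>2"
        proof -
          have "fl g \<bullet> fl g = (norm g)\<^sup>2" by (metis norm_fl power2_norm_eq_inner)
          then show ?thesis using fy by (simp add: y'_def inner_diff_right)
        qed
        moreover have "(e / 2 / norm g) * (norm g)\<^sup>2 > 0" using e gnz by simp
        ultimately show False by linarith
      qed
      then show "y \<in> frontier C" using yC unfolding C_def by (simp add: frontier_def)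
    qed
    have "d0 \<noteq> 0" using d0n by auto
    then have "boundary_ray C (ray d0)" unfolding boundary_ray_def using rayC by blast
    then have sd: "setdist (ray d0) \<Omega> = 0" using starstar unfolding prop_starstar_def C_def by blast
    have "0 \<in> ray d0" unfolding ray_def by (auto intro!: exI[of _ 0])
    then have "ray d0 \<noteq> {}" by blast
    moreover have "setdist (ray d0) \<Omega> < 1 / (norm g + 1)"
    proof -
      have gp: "norm g + 1 > 0" using norm_ge_zero[of g] by linarith
      then have "0 < 1 / (norm g + 1)" by (rule divide_pos_pos[OF zero_less_one])
      then show ?thesis using sd by linarith
    qed
    ultimately obtain y w where yw: "y \<in> ray d0" "w \<in> \<Omega>" "dist y w < 1 / (norm g + 1)"
      using setdist_ltE Om_ne by metis
    obtain t where t: "y = t *\<^sub>R d0" using yw(1) unfolding ray_def by blast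
    have "fl g \<bullet> w \<ge> 1" using g yw(2) by (auto simp: antipolar_iff)
    moreover have "fl g \<bullet> y = 0" using t z by simp
    ultimately have "fl g \<bullet> (w - y) \<ge> 1" by (simp add: inner_diff_right)
    moreover have "\<bar>fl g \<bullet> (w - y)\<bar> \<le> norm g * norm (w - y)" by (rule fl_bound)
    moreover have "norm g * norm (w - y) \<le> norm g * (1 / (norm g + 1))"
      using yw(3) by (intro mult_left_mono) (auto simp: dist_norm norm_minus_commute)
    moreover have "norm g * (1 / (norm g + 1)) < 1"
    proof -
      have gp: "norm g + 1 > 0" using norm_ge_zero[of g] by linarith
      have "norm g < norm g + 1" by simp
      then have "norm g / (norm g + 1) < 1" using gp by (simp add: divide_less_eq)
      then show ?thesis by simp
    qed
    ultimately show ?thesis by linarith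
  qed
qed

lemma anti_interior:
  assumes g: "g \<in> antipolar \<Omega>" and c: "c > 1"
  shows "c *\<^sub>R g \<in> interior (antipolar \<Omega>)"
proof -
  obtain \<kappa> where k: "\<kappa> > 0" "\<And>w. w \<in> \<Omega> \<Longrightarrow> fl g \<bullet> w \<ge> \<kappa> * norm w" using kappa[OF g] by blast
  define e where "e = \<kappa> * (c - 1)"
  have e: "e > 0" using k c by (simp add: e_def)
  have "ball (c *\<^sub>R g) e \<subseteq> antipolar \<Omega>"
  proof
    fix g' assume "g' \<in> ball (c *\<^sub>R g) e"
    then have d: "norm (g' - c *\<^sub>R g) < e" by (simp add: dist_norm norm_minus_commute)
    have "fl g' \<bullet> w \<ge> 1" if w: "w \<in> \<Omega>" for w
    proof -
      have g1: "fl g \<bullet> w \<ge> 1" using g w by (auto simp: antipolar_iff)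
      have "fl g' \<bullet> w = c * (fl g \<bullet> w) + fl (g' - c *\<^sub>R g) \<bullet> w"
        by (simp add: fl_diff fl_scale inner_diff_left)
      moreover have "fl (g' - c *\<^sub>R g) \<bullet> w \<ge> - (e * norm w)"
      proof -
        have "\<bar>fl (g' - c *\<^sub>R g) \<bullet> w\<bar> \<le> norm (g' - c *\<^sub>R g) * norm w" by (rule fl_bound)
        also have "\<dots> \<le> e * norm w" using d by (intro mult_right_mono) auto
        finally show ?thesis by linarith
      qed
      moreover have "e * norm w \<le> (c - 1) * (fl g \<bullet> w)"
        using k(2)[OF w] c by (simp add: e_def mult.commute mult.left_commute mult_left_mono)
      ultimately show ?thesis using g1 by (simp add: algebra_simps)
    qed
    then show "g' \<in> antipolar \<Omega>" by (simp add: antipolar_iff)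
  qed
  then show ?thesis using e by (auto simp: mem_interior)
qed

lemma anti_prop_i:
  assumes "antipolar \<Omega> \<noteq> {}"
  shows "prop_i (antipolar \<Omega>)"
  unfolding prop_i_def using assms anti_convex anti_closed anti_0 anti_scale
  by (auto intro: less_imp_le)

lemma anti_prop_star: "prop_star (antipolar \<Omega>)"
  unfolding prop_star_def
proof (intro allI impI)
  fix c :: real assume c: "c > 1"
  show "(\<lambda>x. c *\<^sub>R x) ` antipolar \<Omega> \<inter> frontier (antipolar \<Omega>) = {}"
    using anti_interior[OF _ c] by (auto simp: frontier_def)
qed

end

definition adm :: "real \<Rightarrow> real \<Rightarrow> nat \<Rightarrow> (nat \<Rightarrow> real) \<Rightarrow> (nat \<Rightarrow> real) \<Rightarrow> real \<Rightarrow> bool" where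
  "adm a b n u v \<delta> \<longleftrightarrow> (\<forall>i<n. a \<le> u i \<and> u i \<le> v i \<and> v i \<le> b) \<and>
      (\<forall>i<n. \<forall>j<n. i \<noteq> j \<longrightarrow> v i \<le> u j \<or> v j \<le> u i) \<and> (\<Sum>i<n. v i - u i) < \<delta>"

lemma ac_iff: "abs_cont_on a b f \<longleftrightarrow> (\<forall>\<epsilon>>0. \<exists>\<delta>>0. \<forall>n u v. adm a b n u v \<delta> \<longrightarrow> (\<Sum>i<n. norm (f (v i) - f (u i))) < \<epsilon>)"
  unfolding abs_cont_on_def adm_def by (rule refl)

lemma ac_lipschitz:
  fixes f :: "real \<Rightarrow> 'a::real_normed_vector" and g :: "real \<Rightarrow> 'b::real_normed_vector"
  assumes ac: "abs_cont_on a b f" and L: "L \<ge> 0"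
    and lip: "\<And>s t. s \<in> {a..b} \<Longrightarrow> t \<in> {a..b} \<Longrightarrow> norm (g s - g t) \<le> L * norm (f s - f t)"
  shows "abs_cont_on a b g"
  unfolding ac_iff
proof (intro allI impI)
  fix \<epsilon> :: real assume e: "\<epsilon> > 0"
  have e': "\<epsilon> / (L + 1) > 0" using e L by simp
  obtain \<delta> where d: "\<delta> > 0" and H: "\<And>n u v. adm a b n u v \<delta> \<Longrightarrow> (\<Sum>i<n. norm (f (v i) - f (u i))) < \<epsilon> / (L + 1)"
    using ac[unfolded ac_iff, rule_format, OF e'] by blast
  show "\<exists>\<delta>>0. \<forall>n u v. adm a b n u v \<delta> \<longrightarrow> (\<Sum>i<n. norm (g (v i) - g (u i))) < \<epsilon>"
  proof (intro exI[of _ \<delta>] conjI allI impI)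
    fix n :: nat and u v :: "nat \<Rightarrow> real"
    assume A: "adm a b n u v \<delta>"
    have "(\<Sum>i<n. norm (g (v i) - g (u i))) \<le> (\<Sum>i<n. L * norm (f (v i) - f (u i)))"
    proof (rule sum_mono)
      fix i assume "i \<in> {..<n}"
      then have "u i \<in> {a..b}" "v i \<in> {a..b}" using A by (auto simp: adm_def)
      then show "norm (g (v i) - g (u i)) \<le> L * norm (f (v i) - f (u i))" by (rule lip[rotated])
    qed
    also have "\<dots> = L * (\<Sum>i<n. norm (f (v i) - f (u i)))" by (simp add: sum_distrib_left)
    also have "\<dots> \<le> L * (\<epsilon> / (L + 1))" using H[OF A] L by (intro mult_left_mono) auto
    also have "\<dots> < \<epsilon>" using e L by (simp add: field_simps)
    finally show "(\<Sum>i<n. norm (g (v i) - g (u i))) < \<epsilon>" .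
  qed (rule d)
qed

lemma ac_cont:
  fixes f :: "real \<Rightarrow> 'a::real_normed_vector"
  assumes ac: "abs_cont_on a b f"
  shows "continuous_on {a..b} f"
  unfolding continuous_on_iff
proof (intro ballI allI impI)
  fix t e :: real assume t: "t \<in> {a..b}" and e: "e > 0"
  obtain \<delta> where d: "\<delta> > 0" and H: "\<And>n u v. adm a b n u v \<delta> \<Longrightarrow> (\<Sum>i<n. norm (f (v i) - f (u i))) < e"
    using ac[unfolded ac_iff, rule_format, OF e] by blast
  show "\<exists>\<delta>>0. \<forall>s\<in>{a..b}. dist s t < \<delta> \<longrightarrow> dist (f s) (f t) < e"
  proof (intro exI[of _ \<delta>] conjI ballI impI)
    fix s assume s: "s \<in> {a..b}" and st: "dist s t < \<delta>"
    have c1: "\<forall>i<(1::nat). a \<le> min s t \<and> min s t \<le> max s t \<and> max s t \<le> b" using s t by auto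
    have c2: "\<forall>i<(1::nat). \<forall>j<(1::nat). i \<noteq> j \<longrightarrow> max s t \<le> min s t \<or> max s t \<le> min s t" by simp
    have "max s t - min s t = \<bar>s - t\<bar>" by (cases "s \<le> t") (simp_all add: max_def min_def)
    then have c3: "(\<Sum>i<(1::nat). max s t - min s t) < \<delta>" using st by (simp add: dist_real_def)
    have "adm a b 1 (\<lambda>_. min s t) (\<lambda>_. max s t) \<delta>" unfolding adm_def using c1 c2 c3 by simp
    then have "(\<Sum>i<(1::nat). norm (f ((\<lambda>_. max s t) i) - f ((\<lambda>_. min s t) i))) < e"
      by (rule H)
    then have "norm (f (max s t) - f (min s t)) < e" by simp
    then show "dist (f s) (f t) < e"
      by (cases "s \<le> t") (auto simp: dist_norm norm_minus_commute max_def min_def)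
  qed (rule d)
qed

lemma lip_cont:
  fixes f :: "real \<Rightarrow> 'a::real_normed_vector" and g :: "real \<Rightarrow> 'b::real_normed_vector"
  assumes c: "continuous_on {a..b} f" and L: "L \<ge> 0"
    and lip: "\<And>s t. s \<in> {a..b} \<Longrightarrow> t \<in> {a..b} \<Longrightarrow> norm (g s - g t) \<le> L * norm (f s - f t)"
  shows "continuous_on {a..b} g"
  unfolding continuous_on_iff
proof (intro ballI allI impI)
  fix t e :: real assume t: "t \<in> {a..b}" and e: "e > 0"
  have e': "e / (L + 1) > 0" using e L by simp
  obtain d where d: "d > 0" "\<forall>s\<in>{a..b}. dist s t < d \<longrightarrow> dist (f s) (f t) < e / (L + 1)"
    using c[unfolded continuous_on_iff, rule_format, OF t e'] by blast
  show "\<exists>d>0. \<forall>s\<in>{a..b}. dist s t < d \<longrightarrow> dist (g s) (g t) < e"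
  proof (intro exI[of _ d] conjI ballI impI)
    fix s assume s: "s \<in> {a..b}" "dist s t < d"
    have "dist (g s) (g t) \<le> L * dist (f s) (f t)" using lip[OF s(1) t] by (simp add: dist_norm)
    also have "\<dots> \<le> L * (e / (L + 1))" using d(2) s L by (intro mult_left_mono) auto
    also have "\<dots> < e" using e L by (simp add: field_simps)
    finally show "dist (g s) (g t) < e" .
  qed (rule d)
qed

lemma interior_double:
  assumes i: "prop_i \<Omega>" and star: "prop_star \<Omega>" and u: "u \<in> \<Omega>"
  shows "2 *\<^sub>R u \<in> interior \<Omega>"
proof -
  have cl: "closed \<Omega>" using i by (simp add: prop_i_def)
  have "(\<lambda>x. (2::real) *\<^sub>R x) ` \<Omega> \<subseteq> \<Omega>" using i by (simp add: prop_i_def)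
  then have "2 *\<^sub>R u \<in> \<Omega>" using u by blast
  moreover have "(\<lambda>x. (2::real) *\<^sub>R x) ` \<Omega> \<inter> frontier \<Omega> = {}" using star by (simp add: prop_star_def)
  then have "2 *\<^sub>R u \<notin> frontier \<Omega>" using u by blast
  ultimately show ?thesis using cl by (simp add: frontier_def closure_closed)
qed

lemma support_exists:
  assumes i: "prop_i \<Omega>" and star: "prop_star \<Omega>" and u: "u \<in> frontier \<Omega>"
  shows "\<exists>g\<in>antipolar \<Omega>. fl g \<bullet> u = 1"
proof -
  have cl: "closed \<Omega>" and cv: "convex \<Omega>" using i by (auto simp: prop_i_def)
  have uO: "u \<in> \<Omega>" using u cl by (simp add: frontier_subset_closed[THEN subsetD])
  have int2: "2 *\<^sub>R u \<in> interior \<Omega>" using interior_double[OF i star uO] .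
  then have "interior \<Omega> \<noteq> {}" by blast
  then have ri: "rel_interior \<Omega> = interior \<Omega>" by (rule rel_interior_nonempty_interior)
  have "u \<notin> rel_interior \<Omega>" using u ri by (simp add: frontier_def)
  moreover have "u \<in> closure \<Omega>" using uO closure_subset by blast
  ultimately obtain a where a: "a \<noteq> 0" and au: "\<And>y. y \<in> closure \<Omega> \<Longrightarrow> a \<bullet> u \<le> a \<bullet> y"
    using supporting_hyperplane_relative_frontier[OF cv] by metis
  have aO: "\<And>y. y \<in> \<Omega> \<Longrightarrow> a \<bullet> u \<le> a \<bullet> y" using au closure_subset by blast
  obtain e where e: "e > 0" "ball (2 *\<^sub>R u) e \<subseteq> \<Omega>" using int2 mem_interior by blast
  define y where "y = 2 *\<^sub>R u - (e / 2 / norm a) *\<^sub>R a"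
  have "dist (2 *\<^sub>R u) y = e / 2" using a e by (simp add: y_def dist_norm)
  then have "y \<in> \<Omega>" using e by auto
  then have "a \<bullet> u \<le> a \<bullet> y" by (rule aO)
  moreover have "a \<bullet> y = 2 * (a \<bullet> u) - (e / 2 / norm a) * (norm a)\<^sup>2"
    by (simp add: y_def inner_diff_right power2_norm_eq_inner)
  moreover have "(e / 2 / norm a) * (norm a)\<^sup>2 > 0" using a e by simp
  ultimately have pos: "a \<bullet> u > 0" by linarith
  define g where "g = fl ((1 / (a \<bullet> u)) *\<^sub>R a)"
  have flg: "fl g = (1 / (a \<bullet> u)) *\<^sub>R a" by (simp add: g_def)
  have "g \<in> antipolar \<Omega>"
    unfolding antipolar_iff flg using aO pos by (auto simp: field_simps)
  moreover have "fl g \<bullet> u = 1" unfolding flg using pos by simp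
  ultimately show ?thesis by blast
qed

lemma anti_frontier:
  assumes g: "g \<in> antipolar \<Omega>" and u: "u \<in> \<Omega>" and gu: "fl g \<bullet> u = 1"
  shows "g \<in> frontier (antipolar \<Omega>)"
proof -
  have "g \<notin> interior (antipolar \<Omega>)"
  proof
    assume "g \<in> interior (antipolar \<Omega>)"
    then obtain e where e: "e > 0" "ball g e \<subseteq> antipolar \<Omega>" using mem_interior by blast
    have gnz: "g \<noteq> 0" using gu by auto
    define g' where "g' = (1 - e / (2 * norm g)) *\<^sub>R g"
    have "dist g g' = e / 2" using gnz e by (simp add: g'_def dist_norm algebra_simps)
    then have "g' \<in> antipolar \<Omega>" using e by auto
    then have "fl g' \<bullet> u \<ge> 1" using u by (simp add: antipolar_iff)
    moreover have "fl g' \<bullet> u = 1 - e / (2 * norm g)" using gu by (simp add: g'_def fl_scale)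
    moreover have "e / (2 * norm g) > 0" using e gnz by simp
    ultimately show False by linarith
  qed
  moreover have "g \<in> closure (antipolar \<Omega>)" using g closure_subset by blast
  ultimately show ?thesis by (simp add: frontier_def)
qed

theorem proposition3:
  fixes \<Omega> :: "(real \<times> real) set"
    and w0 w0d :: "real \<times> real"
    and x y R \<theta> :: "real \<Rightarrow> real"
    and a b :: real
  assumes i: "prop_i \<Omega>" and star: "prop_star \<Omega>" and starstar: "prop_starstar \<Omega>"
    and w0: "w0 \<in> frontier \<Omega>" and w0d: "w0d \<in> frontier (antipolar \<Omega>)"
    and pair: "fst w0d * fst w0 - snd w0d * snd w0 = 1"
    and ab: "a \<le> b"
    and ac: "abs_cont_on a b (\<lambda>t. (x t, y t))"
    and incone: "\<forall>t\<in>{a..b}. (x t, y t) \<in> pos_cone \<Omega>"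
    and nonzero: "\<forall>t\<in>{a..b}. (x t, y t) \<noteq> (0, 0)"
    and Rnn: "\<forall>t\<in>{a..b}. R t \<ge> 0"
    and thdom: "\<forall>t\<in>{a..b}. \<theta> t \<in> hdom \<Omega> w0"
    and repr: "\<forall>t\<in>{a..b}. x t = R t * hcosh \<Omega> w0 (\<theta> t) \<and> y t = R t * hsinh \<Omega> w0 (\<theta> t)"
  shows "abs_cont_on a b R \<and> abs_cont_on a b \<theta> \<and>
    (\<forall>t \<in> {a<..<b}. \<forall>x' y' \<eta>.
       (x has_real_derivative x') (at t) \<and> (y has_real_derivative y') (at t) \<and>
       hdual \<Omega> w0 w0d (\<theta> t) = {\<eta>} \<longrightarrow>
       (R has_real_derivative
          (x' * hcosh (antipolar \<Omega>) w0d \<eta> - y' * hsinh (antipolar \<Omega>) w0d \<eta>)) (at t) \<and>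
       (\<theta> has_real_derivative
          ((y' * hcosh \<Omega> w0 (\<theta> t) - x' * hsinh \<Omega> w0 (\<theta> t)) / R t)) (at t))"
proof -
  define D where "D = antipolar \<Omega>"
  have Dclosed: "closed D" using anti_closed[OF i star starstar] by (simp add: D_def)
  have w0dD: "w0d \<in> D" using w0d Dclosed frontier_subset_closed unfolding D_def by blast
  have Di: "prop_i D" using anti_prop_i[OF i star starstar] w0dD by (auto simp: D_def)
  have Dstar: "prop_star D" using anti_prop_star[OF i star starstar] by (simp add: D_def)
  obtain hO where hO: "\<forall>x\<in>\<Omega>. hO \<bullet> x \<ge> 1" using exists_h[OF i] by blast
  obtain hD where hD: "\<forall>x\<in>D. hD \<bullet> x \<ge> 1" using exists_h[OF Di] by blast
  interpret GO: good \<Omega> hO w0 by (rule good.intro) (use i star hO w0 in auto)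
  interpret GD: good D hD w0d by (rule good.intro) (use Di Dstar hD w0d D_def in auto)
  have FO: "frontier \<Omega> \<subseteq> \<Omega>" by (rule GO.FS)
  have FD: "frontier D \<subseteq> D" by (rule GD.FS)
  have Diff: "\<And>g. g \<in> D \<longleftrightarrow> (\<forall>w\<in>\<Omega>. fl g \<bullet> w \<ge> 1)" by (simp add: D_def antipolar_iff)

  define z where "z = (\<lambda>t. (x t, y t))"
  define w where "w = (\<lambda>t. hpoint \<Omega> w0 (\<theta> t))"
  have acz: "abs_cont_on a b z" using ac by (simp add: z_def)
  have wF: "w t \<in> frontier \<Omega>" and whang: "hang \<Omega> w0 (w t) = \<theta> t" if "t \<in> {a..b}" for t
    using GO.hdom_hpoint[of "\<theta> t"] thdom that by (auto simp: w_def)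
  have wO: "w t \<in> \<Omega>" if "t \<in> {a..b}" for t using wF[OF that] FO by blast
  have hc: "hcosh \<Omega> w0 (\<theta> t) = fst (w t)" "hsinh \<Omega> w0 (\<theta> t) = snd (w t)" for t
    by (simp_all add: hcosh_def hsinh_def w_def)
  have zR: "z t = R t *\<^sub>R w t" if "t \<in> {a..b}" for t
    using repr that by (simp add: z_def hc prod_eq_iff)
  have Rpos: "R t > 0" if "t \<in> {a..b}" for t
  proof -
    have "R t \<noteq> 0"
    proof
      assume "R t = 0"
      then have "z t = 0" using zR[OF that] by simp
      moreover have "(x t, y t) \<noteq> (0, 0)" using nonzero that by blast
      ultimately show False by (simp add: z_def zero_prod_def)
    qed
    then show ?thesis using Rnn that by (simp add: less_le)
  qed

  have supp: "\<exists>g\<in>D. fl g \<bullet> u = 1" if "u \<in> frontier \<Omega>" for u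
    using support_exists[OF i star that] by (simp add: D_def)
  define G where "G = (\<lambda>t. SOME g. g \<in> D \<and> fl g \<bullet> w t = 1)"
  have G: "G t \<in> D" "fl (G t) \<bullet> w t = 1" if "t \<in> {a..b}" for t
  proof -
    have "\<exists>g. g \<in> D \<and> fl g \<bullet> w t = 1" using supp[OF wF[OF that]] by blast
    then have "G t \<in> D \<and> fl (G t) \<bullet> w t = 1" unfolding G_def by (rule someI_ex)
    then show "G t \<in> D" "fl (G t) \<bullet> w t = 1" by auto
  qed
  have lD: "fl g \<bullet> v \<ge> 1" if "g \<in> D" "v \<in> \<Omega>" for g v using that Diff by blast

  have key: "R s - R t \<le> fl g \<bullet> (z s - z t)"
    if s: "s \<in> {a..b}" and t: "t \<in> {a..b}" and g: "g \<in> D" and gt: "fl g \<bullet> w t = 1" for s t g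
  proof -
    have "fl g \<bullet> z s = R s * (fl g \<bullet> w s)" using zR[OF s] by simp
    also have "\<dots> \<ge> R s * 1" using Rpos[OF s] lD[OF g wO[OF s]] by (intro mult_left_mono) auto
    finally have "R s \<le> fl g \<bullet> z s" by simp
    moreover have "fl g \<bullet> z t = R t" using zR[OF t] gt by simp
    ultimately show ?thesis by (simp add: inner_diff_right)
  qed

  have zcont: "continuous_on {a..b} z" using acz by (rule ac_cont)
  have cz: "compact (z ` {a..b})" using zcont by (rule compact_continuous_image) simp
  have zint: "z t \<in> interior (pos_cone \<Omega>)" if t: "t \<in> {a..b}" for t
  proof -
    obtain e where e: "e > 0" "ball (2 *\<^sub>R w t) e \<subseteq> \<Omega>"
      using interior_double[OF i star wO[OF t]] mem_interior by blast
    have Rt: "R t > 0" using Rpos[OF t] .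
    have "ball (z t) (R t * e / 2) \<subseteq> pos_cone \<Omega>"
    proof
      fix q assume q: "q \<in> ball (z t) (R t * e / 2)"
      have "dist (2 *\<^sub>R w t) ((2 / R t) *\<^sub>R q) = (2 / R t) * dist (z t) q"
      proof -
        have "2 *\<^sub>R w t - (2 / R t) *\<^sub>R q = (2 / R t) *\<^sub>R (z t - q)"
          using Rt by (simp add: zR[OF t] algebra_simps)
        then show ?thesis using Rt by (simp add: dist_norm)
      qed
      also have "\<dots> < (2 / R t) * (R t * e / 2)" using q Rt by (intro mult_strict_left_mono) auto
      also have "\<dots> = e" using Rt by simp
      finally have "(2 / R t) *\<^sub>R q \<in> \<Omega>" using e by auto
      then have "(R t / 2) *\<^sub>R ((2 / R t) *\<^sub>R q) \<in> pos_cone \<Omega>" using Rt by (intro pos_coneI) auto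
      then show "q \<in> pos_cone \<Omega>" using Rt by simp
    qed
    then show ?thesis using Rt e by (intro interiorI[OF open_ball]) auto
  qed
  obtain \<delta> where \<delta>: "\<delta> > 0" "(\<Union>q\<in>z ` {a..b}. cball q \<delta>) \<subseteq> interior (pos_cone \<Omega>)"
    using compact_subset_open_imp_cball_epsilon_subset[OF cz open_interior] zint by blast
  obtain Zm where Zm: "\<And>t. t \<in> {a..b} \<Longrightarrow> norm (z t) \<le> Zm"
    using compact_imp_bounded[OF cz] unfolding bounded_iff by blast
  have Zm0: "Zm \<ge> 0" using Zm[of a] ab by (meson atLeastAtMost_iff norm_ge_zero order_refl order_trans)
  define B where "B = norm w0d * Zm / \<delta>"
  have B0: "B \<ge> 0" using Zm0 \<delta> by (simp add: B_def)
  have gbound: "norm g \<le> B" if t: "t \<in> {a..b}" and g: "g \<in> D" and gt: "fl g \<bullet> w t = 1" for t g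
  proof -
    have gnz: "g \<noteq> 0" using gt by auto
    have nonneg: "fl g \<bullet> q \<ge> 0" if "q \<in> pos_cone \<Omega>" for q
      using cone_nonneg[OF i star starstar, of g q] g that closure_subset by (auto simp: D_def)
    define q where "q = z t - (\<delta> / norm g) *\<^sub>R fl g"
    have "dist (z t) q = \<delta>" using gnz \<delta> by (simp add: q_def dist_norm)
    then have qc: "q \<in> cball (z t) \<delta>" by simp
    have "\<forall>p\<in>z ` {a..b}. cball p \<delta> \<subseteq> interior (pos_cone \<Omega>)" using \<delta>(2) by (simp only: UN_subset_iff)
    then have "cball (z t) \<delta> \<subseteq> interior (pos_cone \<Omega>)" using t by simp
    then have "q \<in> interior (pos_cone \<Omega>)" using qc by (rule subsetD)
    then have "fl g \<bullet> q \<ge> 0" using nonneg interior_subset by blast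
    moreover have "fl g \<bullet> fl g = (norm g)\<^sup>2" by (metis norm_fl power2_norm_eq_inner)
    ultimately have "(\<delta> / norm g) * (norm g)\<^sup>2 \<le> fl g \<bullet> z t"
      by (simp add: q_def inner_diff_right)
    then have A: "\<delta> * norm g \<le> fl g \<bullet> z t" using gnz by (simp add: power2_eq_square)
    have "fl g \<bullet> z t = R t" using zR[OF t] gt by simp
    also have "R t \<le> fl w0d \<bullet> z t"
    proof -
      have "fl w0d \<bullet> z t = R t * (fl w0d \<bullet> w t)" using zR[OF t] by simp
      also have "\<dots> \<ge> R t * 1" using Rpos[OF t] lD[OF w0dD wO[OF t]] by (intro mult_left_mono) auto
      finally show ?thesis by simp
    qed
    also have "\<dots> \<le> norm w0d * norm (z t)" using fl_bound[of w0d "z t"] by simp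
    also have "\<dots> \<le> norm w0d * Zm" using Zm[OF t] by (intro mult_left_mono) auto
    finally have "\<delta> * norm g \<le> norm w0d * Zm" using A by simp
    then show ?thesis using \<delta> by (simp add: B_def field_simps)
  qed

  have Rlip: "norm (R s - R t) \<le> B * norm (z s - z t)" if s: "s \<in> {a..b}" and t: "t \<in> {a..b}" for s t
  proof -
    have "R s - R t \<le> fl (G t) \<bullet> (z s - z t)" using key[OF s t G[OF t]] .
    also have "\<dots> \<le> norm (G t) * norm (z s - z t)" using fl_bound[of "G t" "z s - z t"] by simp
    also have "\<dots> \<le> B * norm (z s - z t)" using gbound[OF t G[OF t]] by (intro mult_right_mono) auto
    finally have 1: "R s - R t \<le> B * norm (z s - z t)" .
    have "R t - R s \<le> fl (G s) \<bullet> (z t - z s)" using key[OF t s G[OF s]] .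
    also have "\<dots> \<le> norm (G s) * norm (z t - z s)" using fl_bound[of "G s" "z t - z s"] by simp
    also have "\<dots> \<le> B * norm (z t - z s)" using gbound[OF s G[OF s]] by (intro mult_right_mono) auto
    finally have 2: "R t - R s \<le> B * norm (z s - z t)" by (simp add: norm_minus_commute)
    show ?thesis using 1 2 by simp
  qed
  have acR: "abs_cont_on a b R" by (rule ac_lipschitz[OF acz B0 Rlip])
  have Rcont: "continuous_on {a..b} R" by (rule lip_cont[OF zcont B0 Rlip])
  obtain tm where tm: "tm \<in> {a..b}" "\<And>s. s \<in> {a..b} \<Longrightarrow> R tm \<le> R s"
    using continuous_attains_inf[OF compact_Icc _ Rcont] ab by auto
  define Rm where "Rm = R tm"
  have Rm: "Rm > 0" "\<And>s. s \<in> {a..b} \<Longrightarrow> Rm \<le> R s" using Rpos[OF tm(1)] tm(2) by (auto simp: Rm_def)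

  have crw: "cr (w t) (w s) = cr (z t) (z s - z t) / (R t * R s)" if s: "s \<in> {a..b}" and t: "t \<in> {a..b}" for s t
  proof -
    have "cr (z t) (z s - z t) = cr (z t) (z s)" by (simp add: cr_diff_right)
    also have "\<dots> = R t * R s * cr (w t) (w s)" by (simp add: zR[OF s] zR[OF t])
    finally show ?thesis using Rpos[OF s] Rpos[OF t] by simp
  qed
  have thlip: "norm (\<theta> s - \<theta> t) \<le> (Zm / Rm\<^sup>2) * norm (z s - z t)" if s: "s \<in> {a..b}" and t: "t \<in> {a..b}" for s t
  proof -
    have l: "\<And>v. v \<in> \<Omega> \<Longrightarrow> fl (G t) \<bullet> v \<ge> 1" using lD G[OF t] by blast
    have "\<bar>\<theta> s - \<theta> t\<bar> \<le> \<bar>cr (w t) (w s)\<bar>"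
      using GO.hang_bounds(1)[OF l wF[OF t] wF[OF s] G(2)[OF t]] whang[OF s] whang[OF t] by simp
    also have "\<dots> = \<bar>cr (z t) (z s - z t)\<bar> / (R t * R s)" using crw[OF s t] Rpos[OF s] Rpos[OF t] by (simp add: abs_div)
    also have "\<dots> \<le> (Zm * norm (z s - z t)) / (Rm * Rm)"
    proof (rule frac_le)
      show "0 \<le> Zm * norm (z s - z t)" using Zm0 by simp
      have "\<bar>cr (z t) (z s - z t)\<bar> \<le> norm (z t) * norm (z s - z t)" by (rule cr_bound)
      also have "\<dots> \<le> Zm * norm (z s - z t)" using Zm[OF t] by (intro mult_right_mono) auto
      finally show "\<bar>cr (z t) (z s - z t)\<bar> \<le> Zm * norm (z s - z t)" .
      show "0 < Rm * Rm" using Rm by simp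
      show "Rm * Rm \<le> R t * R s" using Rm(1) Rm(2)[OF s] Rm(2)[OF t] by (intro mult_mono) auto
    qed
    finally show ?thesis by (simp add: power2_eq_square)
  qed
  have acth: "abs_cont_on a b \<theta>" by (rule ac_lipschitz[OF acz _ thlip]) (use Zm0 Rm in simp)

  have deriv: "\<forall>t \<in> {a<..<b}. \<forall>x' y' \<eta>.
       (x has_real_derivative x') (at t) \<and> (y has_real_derivative y') (at t) \<and>
       hdual \<Omega> w0 w0d (\<theta> t) = {\<eta>} \<longrightarrow>
       (R has_real_derivative
          (x' * hcosh (antipolar \<Omega>) w0d \<eta> - y' * hsinh (antipolar \<Omega>) w0d \<eta>)) (at t) \<and>
       (\<theta> has_real_derivative
          ((y' * hcosh \<Omega> w0 (\<theta> t) - x' * hsinh \<Omega> w0 (\<theta> t)) / R t)) (at t)"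
  proof (intro ballI allI impI)
    fix t x' y' \<eta>
    assume t: "t \<in> {a<..<b}" and H: "(x has_real_derivative x') (at t) \<and> (y has_real_derivative y') (at t) \<and>
       hdual \<Omega> w0 w0d (\<theta> t) = {\<eta>}"
    have tab: "t \<in> {a..b}" using t by auto
    have dx: "((\<lambda>s. (x s - x t) / (s - t)) \<longlongrightarrow> x') (at t)" using H by (simp add: has_field_derivative_iff)
    have dy: "((\<lambda>s. (y s - y t) / (s - t)) \<longlongrightarrow> y') (at t)" using H by (simp add: has_field_derivative_iff)
    have hd: "hdual \<Omega> w0 w0d (\<theta> t) = {\<eta>}" using H by simp
    have hpw: "hpoint \<Omega> w0 (\<theta> t) = w t" by (simp add: w_def)
    have "\<eta> \<in> hdual \<Omega> w0 w0d (\<theta> t)" using hd by simp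
    then have \<eta>dom: "\<eta> \<in> hdom D w0d"
      and \<eta>eq: "hcosh \<Omega> w0 (\<theta> t) * hcosh D w0d \<eta> - hsinh \<Omega> w0 (\<theta> t) * hsinh D w0d \<eta> = 1"
      by (auto simp: hdual_def D_def)
    define g\<eta> where "g\<eta> = hpoint D w0d \<eta>"
    have g\<eta>F: "g\<eta> \<in> frontier D" using GD.hdom_hpoint[OF \<eta>dom] by (simp add: g\<eta>_def)
    have g\<eta>D: "g\<eta> \<in> D" using g\<eta>F FD by blast
    have "fst (w t) * fst g\<eta> - snd (w t) * snd g\<eta> = 1"
      using \<eta>eq unfolding hcosh_def hsinh_def hpw g\<eta>_def[symmetric] .
    then have g\<eta>w: "fl g\<eta> \<bullet> w t = 1" using fl_inner[of g\<eta> "w t"] by (simp add: algebra_simps)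
    have uniq: "g = g\<eta>" if g: "g \<in> D" and gw: "fl g \<bullet> w t = 1" for g
    proof -
      have gF: "g \<in> frontier D" using anti_frontier[of g \<Omega> "w t"] g wO[OF tab] gw by (simp add: D_def)
      define \<eta>' where "\<eta>' = hang D w0d g"
      have hp: "hpoint D w0d \<eta>' = g" using GD.hpoint_hang[OF gF] by (simp add: \<eta>'_def)
      have "\<eta>' \<in> hdom D w0d" using gF by (auto simp: hdom_def \<eta>'_def)
      moreover have "fst (w t) * fst g - snd (w t) * snd g = 1"
        using gw fl_inner[of g "w t"] by (simp add: algebra_simps)
      then have "hcosh \<Omega> w0 (\<theta> t) * hcosh D w0d \<eta>' - hsinh \<Omega> w0 (\<theta> t) * hsinh D w0d \<eta>' = 1"
        unfolding hcosh_def hsinh_def hp hpw .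
      ultimately have "\<eta>' \<in> hdual \<Omega> w0 w0d (\<theta> t)" by (simp add: hdual_def D_def)
      then have "\<eta>' = \<eta>" using hd by simp
      then show ?thesis using hp by (simp add: g\<eta>_def)
    qed
    have evab: "eventually (\<lambda>s. s \<in> {a..b} \<and> s \<noteq> t) (at t)"
      unfolding eventually_at using t
      by (intro exI[of _ "min (t - a) (b - t)"]) (auto simp: dist_real_def)
    have Rc: "(R \<longlongrightarrow> R t) (at t)"
      using continuous_on_interior[OF Rcont, of t] t by (simp add: continuous_at)
    have zc: "(z \<longlongrightarrow> z t) (at t)"
      using continuous_on_interior[OF zcont, of t] t by (simp add: continuous_at)
    have Rt: "R t > 0" using Rpos[OF tab] .
    have wc: "(w \<longlongrightarrow> w t) (at t)"
    proof -
      have lim: "((\<lambda>s. (1 / R s) *\<^sub>R z s) \<longlongrightarrow> (1 / R t) *\<^sub>R z t) (at t)"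
        using Rc zc Rt by (intro tendsto_intros) auto
      have eq: "(1 / R t) *\<^sub>R z t = w t" using zR[OF tab] Rt by simp
      have ev: "eventually (\<lambda>s. (1 / R s) *\<^sub>R z s = w s) (at t)"
        using evab
      proof eventually_elim
        case (elim s)
        then have sab: "s \<in> {a..b}" by simp
        show ?case using zR[OF sab] Rpos[OF sab] by simp
      qed
      have "(w \<longlongrightarrow> (1 / R t) *\<^sub>R z t) (at t)" by (rule Lim_transform_eventually[OF lim ev])
      then show ?thesis unfolding eq .
    qed
    define \<Delta> where "\<Delta> = (\<lambda>s. ((x s - x t) / (s - t), (y s - y t) / (s - t)))"
    have \<Delta>c: "(\<Delta> \<longlongrightarrow> (x', y')) (at t)" unfolding \<Delta>_def using dx dy by (rule tendsto_Pair)
    have z\<Delta>: "z s - z t = (s - t) *\<^sub>R \<Delta> s" if "s \<noteq> t" for s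
      using that by (simp add: z_def \<Delta>_def prod_eq_iff)
    have Gc: "eventually (\<lambda>s. norm (G s - g\<eta>) < \<epsilon>) (at t)" if \<epsilon>: "\<epsilon> > 0" for \<epsilon>
    proof -
      define K where "K = D \<inter> cball 0 B \<inter> {g. \<epsilon> \<le> norm (g - g\<eta>)}"
      have cK: "compact K"
      proof -
        have "closed {g. \<epsilon> \<le> norm (g - g\<eta>)}" by (intro closed_Collect_le continuous_intros)
        then have "closed K" unfolding K_def using Dclosed by (intro closed_Int) auto
        moreover have "bounded K" unfolding K_def by (rule bounded_subset[OF bounded_cball]) blast
        ultimately show ?thesis by (simp add: compact_eq_bounded_closed)
      qed
      show ?thesis
      proof (cases "K = {}")
        case True
        show ?thesis using evab
        proof eventually_elim
          case (elim s)
          then have sab: "s \<in> {a..b}" by simp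
          have "G s \<in> D" "norm (G s) \<le> B" using G[OF sab] gbound[OF sab G[OF sab]] by auto
          then show ?case using True unfolding K_def by (auto simp: not_le)
        qed
      next
        case False
        have ctn: "continuous_on K (\<lambda>g. fl g \<bullet> w t)"
          unfolding fl_inner_swap by (intro continuous_intros)
        obtain g1 where g1: "g1 \<in> K" "\<And>g. g \<in> K \<Longrightarrow> fl g1 \<bullet> w t \<le> fl g \<bullet> w t"
          using continuous_attains_inf[OF cK False ctn] by blast
        define m where "m = fl g1 \<bullet> w t"
        have g1D: "g1 \<in> D" and g1e: "\<epsilon> \<le> norm (g1 - g\<eta>)" using g1(1) unfolding K_def by auto
        have "m \<ge> 1" using lD[OF g1D wO[OF tab]] unfolding m_def .
        moreover have "m \<noteq> 1"
        proof
          assume "m = 1"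
          then have "g1 = g\<eta>" using uniq[OF g1D] unfolding m_def by blast
          then show False using g1e \<epsilon> by simp
        qed
        ultimately have m1: "m > 1" by simp
        have mB: "(m - 1) / (B + 1) > 0" using m1 B0 by simp
        have "eventually (\<lambda>s. dist (w s) (w t) < (m - 1) / (B + 1)) (at t)"
          using wc mB by (simp add: tendsto_iff)
        then show ?thesis using evab
        proof eventually_elim
          case (elim s)
          then have sab: "s \<in> {a..b}" by simp
          have Gs: "G s \<in> D" "fl (G s) \<bullet> w s = 1" using G[OF sab] by auto
          have nb: "norm (G s) \<le> B" using gbound[OF sab Gs] .
          have "fl (G s) \<bullet> w t = fl (G s) \<bullet> w s + fl (G s) \<bullet> (w t - w s)" by (simp add: inner_diff_right)
          also have "\<dots> \<le> 1 + norm (G s) * norm (w t - w s)" using Gs fl_bound[of "G s" "w t - w s"] by simp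
          also have "\<dots> \<le> 1 + B * ((m - 1) / (B + 1))"
          proof -
            have "norm (w t - w s) \<le> (m - 1) / (B + 1)" using elim(1) by (simp add: dist_norm norm_minus_commute)
            then have "norm (G s) * norm (w t - w s) \<le> B * ((m - 1) / (B + 1))"
              using nb B0 by (intro mult_mono) auto
            then show ?thesis by simp
          qed
          also have "\<dots> < m" using m1 B0 by (simp add: field_simps)
          finally have lt: "fl (G s) \<bullet> w t < m" .
          have "G s \<notin> K"
          proof
            assume "G s \<in> K"
            then have "m \<le> fl (G s) \<bullet> w t" using g1(2) unfolding m_def by blast
            then show False using lt by simp
          qed
          then show ?case using Gs nb unfolding K_def by (auto simp: not_le)
        qed
      qed
    qed
    have Gc0: "((\<lambda>s. norm (G s - g\<eta>)) \<longlongrightarrow> 0) (at t)"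
      unfolding tendsto_iff using Gc by simp

    have Rd: "(R has_real_derivative (fl g\<eta> \<bullet> (x', y'))) (at t)"
    proof -
      define Q where "Q = (\<lambda>s. (R s - R t) / (s - t))"
      have bnd: "eventually (\<lambda>s. norm (Q s - fl g\<eta> \<bullet> \<Delta> s) \<le> norm (G s - g\<eta>) * norm (\<Delta> s)) (at t)"
        using evab
      proof eventually_elim
        case (elim s)
        then have sab: "s \<in> {a..b}" and st: "s \<noteq> t" by auto
        define d where "d = s - t"
        define A where "A = fl (G s) \<bullet> \<Delta> s"
        define C where "C = fl g\<eta> \<bullet> \<Delta> s"
        define N where "N = R s - R t"
        have up: "N \<le> d * C"
          using key[OF sab tab g\<eta>D g\<eta>w] z\<Delta>[OF st] by (simp add: N_def d_def C_def)
        have "R t - R s \<le> fl (G s) \<bullet> (z t - z s)" using key[OF tab sab G[OF sab]] .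
        moreover have "z t - z s = - (d *\<^sub>R \<Delta> s)" using z\<Delta>[OF st] unfolding d_def by (metis minus_diff_eq)
        ultimately have lo: "d * A \<le> N" by (simp add: N_def A_def)
        have dnz: "d \<noteq> 0" using st by (simp add: d_def)
        have "\<bar>N / d - C\<bar> \<le> \<bar>A - C\<bar>"
        proof (cases "d > 0")
          case True
          have "A \<le> N / d" using lo True by (simp add: pos_le_divide_eq mult.commute)
          moreover have "N / d \<le> C" using up True by (simp add: pos_divide_le_eq mult.commute)
          ultimately show ?thesis by linarith
        next
          case False
          then have dn: "d < 0" using dnz by simp
          have "N / d \<le> A" using lo dn by (simp add: neg_divide_le_eq mult.commute)
          moreover have "C \<le> N / d" using up dn by (simp add: neg_le_divide_eq mult.commute)
          ultimately show ?thesis by linarith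
        qed
        also have "\<bar>A - C\<bar> = \<bar>fl (G s - g\<eta>) \<bullet> \<Delta> s\<bar>" by (simp add: A_def C_def fl_diff inner_diff_left)
        also have "\<dots> \<le> norm (G s - g\<eta>) * norm (\<Delta> s)" by (rule fl_bound)
        finally show ?case by (simp add: Q_def N_def d_def C_def)
      qed
      have "((\<lambda>s. norm (G s - g\<eta>) * norm (\<Delta> s)) \<longlongrightarrow> 0 * norm (x', y')) (at t)"
        by (intro tendsto_intros Gc0 \<Delta>c)
      then have "((\<lambda>s. Q s - fl g\<eta> \<bullet> \<Delta> s) \<longlongrightarrow> 0) (at t)"
        by (intro Lim_null_comparison[OF bnd]) simp
      moreover have "((\<lambda>s. fl g\<eta> \<bullet> \<Delta> s) \<longlongrightarrow> fl g\<eta> \<bullet> (x', y')) (at t)" using \<Delta>c by (intro tendsto_intros)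
      ultimately have "((\<lambda>s. (Q s - fl g\<eta> \<bullet> \<Delta> s) + fl g\<eta> \<bullet> \<Delta> s) \<longlongrightarrow> 0 + fl g\<eta> \<bullet> (x', y')) (at t)"
        by (rule tendsto_add)
      then have "(Q \<longlongrightarrow> fl g\<eta> \<bullet> (x', y')) (at t)" by simp
      then show ?thesis by (simp add: has_field_derivative_iff Q_def)
    qed
    have Rval: "fl g\<eta> \<bullet> (x', y') = x' * hcosh (antipolar \<Omega>) w0d \<eta> - y' * hsinh (antipolar \<Omega>) w0d \<eta>"
      by (simp add: fl_def inner_pair_expand hcosh_def hsinh_def g\<eta>_def D_def mult.commute)

    have thd: "(\<theta> has_real_derivative (cr (z t) (x', y') / (R t * R t))) (at t)"
    proof -
      define P where "P = (\<lambda>s. (\<theta> s - \<theta> t) / (s - t))"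
      define V where "V = (\<lambda>s. cr (z t) (\<Delta> s) / (R t * R s))"
      have Vc: "(V \<longlongrightarrow> cr (z t) (x', y') / (R t * R t)) (at t)"
        unfolding V_def cr_def using \<Delta>c Rc Rt by (intro tendsto_intros) auto
      have lc: "((\<lambda>s. fl g\<eta> \<bullet> w s) \<longlongrightarrow> fl g\<eta> \<bullet> w t) (at t)" using wc by (intro tendsto_intros)
      have l: "\<And>v. v \<in> \<Omega> \<Longrightarrow> fl g\<eta> \<bullet> v \<ge> 1" using lD[OF g\<eta>D] by blast
      have bnd: "eventually (\<lambda>s. norm (P s - V s) \<le> \<bar>V s\<bar> * (fl g\<eta> \<bullet> w s - 1)) (at t)"
        using evab
      proof eventually_elim
        case (elim s)
        then have sab: "s \<in> {a..b}" and st: "s \<noteq> t" by auto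
        have hb: "\<bar>hang \<Omega> w0 (w s) - hang \<Omega> w0 (w t) - cr (w t) (w s)\<bar> \<le> \<bar>cr (w t) (w s)\<bar> * (fl g\<eta> \<bullet> w s - 1)"
          by (rule GO.hang_bounds(2)[OF l wF[OF tab] wF[OF sab] g\<eta>w])
        have c: "cr (w t) (w s) = (s - t) * V s"
          using crw[OF sab tab] z\<Delta>[OF st] by (simp add: V_def)
        have "\<bar>(\<theta> s - \<theta> t) - (s - t) * V s\<bar> \<le> \<bar>(s - t) * V s\<bar> * (fl g\<eta> \<bullet> w s - 1)"
          using hb c whang[OF sab] whang[OF tab] by simp
        then have "\<bar>s - t\<bar> * \<bar>P s - V s\<bar> \<le> \<bar>s - t\<bar> * (\<bar>V s\<bar> * (fl g\<eta> \<bullet> w s - 1))"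
        proof -
          have sp: "(s - t) * P s = \<theta> s - \<theta> t" using st by (simp add: P_def)
          have "(\<theta> s - \<theta> t) - (s - t) * V s = (s - t) * (P s - V s)" unfolding sp[symmetric] by (simp add: right_diff_distrib)
          then show ?thesis using \<open>\<bar>(\<theta> s - \<theta> t) - (s - t) * V s\<bar> \<le> _\<close> by (simp add: abs_mult mult.assoc)
        qed
        then show ?case using st by simp
      qed
      have "((\<lambda>s. \<bar>V s\<bar> * (fl g\<eta> \<bullet> w s - 1)) \<longlongrightarrow> \<bar>cr (z t) (x', y') / (R t * R t)\<bar> * (fl g\<eta> \<bullet> w t - 1)) (at t)"
        by (intro tendsto_intros Vc lc)
      then have "((\<lambda>s. \<bar>V s\<bar> * (fl g\<eta> \<bullet> w s - 1)) \<longlongrightarrow> 0) (at t)" using g\<eta>w by simp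
      then have "((\<lambda>s. P s - V s) \<longlongrightarrow> 0) (at t)" by (rule Lim_null_comparison[OF bnd])
      then have "((\<lambda>s. (P s - V s) + V s) \<longlongrightarrow> 0 + cr (z t) (x', y') / (R t * R t)) (at t)"
        using Vc by (rule tendsto_add)
      then have "(P \<longlongrightarrow> cr (z t) (x', y') / (R t * R t)) (at t)" by simp
      then show ?thesis by (simp add: has_field_derivative_iff P_def)
    qed
    have thval: "cr (z t) (x', y') / (R t * R t) = (y' * hcosh \<Omega> w0 (\<theta> t) - x' * hsinh \<Omega> w0 (\<theta> t)) / R t"
    proof -
      have "cr (z t) (x', y') = R t * (y' * fst (w t) - x' * snd (w t))"
        using zR[OF tab] by (simp add: cr_def algebra_simps)
      then show ?thesis using Rt by (simp add: hc)
    qed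
    show "(R has_real_derivative (x' * hcosh (antipolar \<Omega>) w0d \<eta> - y' * hsinh (antipolar \<Omega>) w0d \<eta>)) (at t) \<and>
       (\<theta> has_real_derivative ((y' * hcosh \<Omega> w0 (\<theta> t) - x' * hsinh \<Omega> w0 (\<theta> t)) / R t)) (at t)"
      using Rd Rval thd thval by simp
  qed
  show ?thesis using acR acth deriv by blast
qed

end
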